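(* Let $n,m,k$ be positive integers, let $X\in\mathbb{C}^{n\times n}$ be Hermitian, let $\Lambda:\mathbb{C}^{n\times n}\to\mathbb{C}^{m\times m}$ be a linear map and $Y\in\mathbb{C}^{m\times m}$. Consider the rank-constrained problem \[ (\mathrm{P})\qquad \max_{\rho\in\mathbb{C}^{n\times n}}\ \operatorname{Tr}(X\rho)\quad\text{s.t.}\quad \Lambda(\rho)=Y,\ \operatorname{Tr}(\rho)=1,\ \rho\ge 0,\ \operatorname{rank}(\rho)\le k . \] Let $\mathcal{H}_A=\mathcal{H}_B=\mathbb{C}^n\otimes\mathbb{C}^k$, let $\widetilde{X}=X\otimes\mathbb{1}_k$, and let $\widetilde{\Lambda}(\cdot)=\Lambda[\operatorname{Tr}_2(\cdot)]$, where $\operatorname{Tr}_2$ is the partial trace over the factor $\mathbb{C}^k$. Then the problem (P) is equivalent to (has the same optimal value as) the conic program \[ (\mathrm{C})\qquad \max_{\Phi_{AB}}\ \operatorname{Tr}\big[(\widetilde{X}_A\otimes\mathbb{1}_B)\Phi_{AB}\big]\quad\text{s.t.}\quad \Phi_{AB}\in\mathrm{SEP},\ \operatorname{Tr}(\Phi_{AB})=1,\ V_{AB}\Phi_{AB}=\Phi_{AB},\ (\widetilde{\Lambda}_A\otimes\mathrm{id}_B)(\Phi_{AB})=Y\otimes\operatorname{Tr}_A(\Phi_{AB}). \]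
   Context: $\mathrm{SEP}$ denotes the cone of (unnormalized) separable operators on $\mathcal{H}_A\otimes\mathcal{H}_B$, i.e. the convex hull of $\{M_A\otimes N_B: M_A\ge0,\ N_B\ge 0\}$ with $M_A,N_B$ complex positive semidefinite operators on $\mathcal{H}_A,\mathcal{H}_B$. $V_{AB}$ is the swap operator on $\mathcal{H}_A\otimes\mathcal{H}_B$, $V_{AB}\ket{\psi_1}\ket{\psi_2}=\ket{\psi_2}\ket{\psi_1}$. A subscript $A$ (resp. $B$) indicates that an operator or map acts on $\mathcal{H}_A$ (resp. $\mathcal{H}_B$); $\mathrm{id}_B$ is the identity map on operators on $\mathcal{H}_B$; $\operatorname{Tr}_A$ is the partial trace over $\mathcal{H}_A$, so both sides of the last constraint are operators on $\mathbb{C}^m\otimes\mathcal{H}_B$. *)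

theory Defs
  imports "Jordan_Normal_Form.Schur_Decomposition" "Jordan_Normal_Form.DL_Rank"
    "HOL-Library.Extended_Real"
begin

(* Conventions: an operator on C^d is a complex matrix in carrier_mat d d.
   C^a \<otimes> C^b is identified with C^(a*b), basis vector e_i \<otimes> e_j having index i*b + j
   (Kronecker convention). *)

definition mtrace :: "complex mat \<Rightarrow> complex" where
  "mtrace A = (\<Sum>i<dim_row A. A $$ (i, i))"

definition hermitian :: "complex mat \<Rightarrow> bool" where
  "hermitian A \<longleftrightarrow> square_mat A \<and> mat_adjoint A = A"

definition psd :: "nat \<Rightarrow> complex mat \<Rightarrow> bool" where
  "psd d A \<longleftrightarrow> A \<in> carrier_mat d d \<and>
     (\<forall>v \<in> carrier_vec d. let q = (A *\<^sub>v v) \<bullet>c v in Im q = 0 \<and> Re q \<ge> 0)"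

definition mrank :: "nat \<Rightarrow> complex mat \<Rightarrow> nat" where
  "mrank d A = vec_space.rank d (A :: complex mat)"

definition kron :: "complex mat \<Rightarrow> complex mat \<Rightarrow> complex mat" where
  "kron A B = mat (dim_row A * dim_row B) (dim_col A * dim_col B)
     (\<lambda>(i, j). A $$ (i div dim_row B, j div dim_col B) * B $$ (i mod dim_row B, j mod dim_col B))"

definition ptrace2 :: "nat \<Rightarrow> nat \<Rightarrow> complex mat \<Rightarrow> complex mat" where
  "ptrace2 a b M = mat a a (\<lambda>(i, j). \<Sum>l<b. M $$ (i * b + l, j * b + l))"

definition ptrace1 :: "nat \<Rightarrow> nat \<Rightarrow> complex mat \<Rightarrow> complex mat" where
  "ptrace1 a b M = mat b b (\<lambda>(i, j). \<Sum>l<a. M $$ (l * b + i, l * b + j))"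

definition swap_op :: "nat \<Rightarrow> complex mat" where
  "swap_op d = mat (d * d) (d * d) (\<lambda>(i, j). if i = (j mod d) * d + j div d then 1 else 0)"

definition lin_map_mat :: "nat \<Rightarrow> nat \<Rightarrow> (complex mat \<Rightarrow> complex mat) \<Rightarrow> bool" where
  "lin_map_mat d1 d2 L \<longleftrightarrow>
     (\<forall>A \<in> carrier_mat d1 d1. L A \<in> carrier_mat d2 d2) \<and>
     (\<forall>A \<in> carrier_mat d1 d1. \<forall>B \<in> carrier_mat d1 d1. L (A + B) = L A + L B) \<and>
     (\<forall>c. \<forall>A \<in> carrier_mat d1 d1. L (c \<cdot>\<^sub>m A) = c \<cdot>\<^sub>m L A)"

(* (L \<otimes> id_B) applied to an operator on C^dA \<otimes> C^dB, L : dA x dA \<rightarrow> m x m.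
   (L \<otimes> id)(\<Phi>) = \<Sum>_{b,b'} L(\<Phi>_{b b'}) \<otimes> |b><b'|, \<Phi>_{b b'} the blocks of \<Phi>. *)
definition map_tensor_id :: "nat \<Rightarrow> nat \<Rightarrow> nat \<Rightarrow> (complex mat \<Rightarrow> complex mat) \<Rightarrow> complex mat \<Rightarrow> complex mat" where
  "map_tensor_id dA dB m L \<Phi> = mat (m * dB) (m * dB)
     (\<lambda>(i, j). L (mat dA dA (\<lambda>(a, a'). \<Phi> $$ (a * dB + i mod dB, a' * dB + j mod dB)))
               $$ (i div dB, j div dB))"

(* cone of separable operators on C^dA \<otimes> C^dB: convex hull of {M \<otimes> N | M, N \<ge> 0},
   i.e. finite sums of such products (the generating set is a cone containing 0) *)
definition SEP :: "nat \<Rightarrow> nat \<Rightarrow> complex mat set" where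
  "SEP dA dB = {\<Phi>. \<exists>(r::nat) M N. (\<forall>i<r. psd dA (M i) \<and> psd dB (N i)) \<and>
       \<Phi> = mat (dA * dB) (dA * dB) (\<lambda>ij. \<Sum>i<r. kron (M i) (N i) $$ ij)}"

definition valP :: "nat \<Rightarrow> nat \<Rightarrow> nat \<Rightarrow> complex mat \<Rightarrow> (complex mat \<Rightarrow> complex mat) \<Rightarrow> complex mat \<Rightarrow> ereal" where
  "valP n m k X \<Lambda> Y = Sup {ereal (Re (mtrace (X * \<rho>))) | \<rho>.
      \<rho> \<in> carrier_mat n n \<and> \<Lambda> \<rho> = Y \<and> mtrace \<rho> = 1 \<and> psd n \<rho> \<and> mrank n \<rho> \<le> k}"

definition valC :: "nat \<Rightarrow> nat \<Rightarrow> nat \<Rightarrow> complex mat \<Rightarrow> (complex mat \<Rightarrow> complex mat) \<Rightarrow> complex mat \<Rightarrow> ereal" where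
  "valC n m k X \<Lambda> Y =
    (let d = n * k;
         Xt = kron X (1\<^sub>m k);
         \<Lambda>t = (\<lambda>\<rho>. \<Lambda> (ptrace2 n k \<rho>))
     in Sup {ereal (Re (mtrace (kron Xt (1\<^sub>m d) * \<Phi>))) | \<Phi>.
        \<Phi> \<in> SEP d d \<and> mtrace \<Phi> = 1 \<and> swap_op d * \<Phi> = \<Phi> \<and>
        map_tensor_id d d m \<Lambda>t \<Phi> = kron Y (ptrace1 d d \<Phi>)})"

end

theory Submission
  imports Defs
begin


lemma sum_split_divmod: fixes f :: "nat \<Rightarrow> nat \<Rightarrow> 'a::comm_monoid_add" and a b :: nat
  shows "(\<Sum>p<a*b. f (p div b) (p mod b)) = (\<Sum>i<a. \<Sum>j<b. f i j)"
proof (cases "b = 0")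
  case True then show ?thesis by simp
next
  case False
  have 1: "p div b < a" if "p < a*b" for p using that by (simp add: less_mult_imp_div_less)
  have 2: "i*b+j < a*b" if "i < a" "j < b" for i j
  proof -
    have "i*b+j < i*b + b" using that by simp
    also have "\<dots> = Suc i * b" by simp
    also have "\<dots> \<le> a*b" using that by (intro mult_le_mono1) simp
    finally show ?thesis .
  qed
  have "(\<Sum>p<a*b. f (p div b) (p mod b)) = (\<Sum>(i,j)\<in>{..<a}\<times>{..<b}. f i j)"
    by (rule sum.reindex_bij_witness[where i="\<lambda>(i,j). i*b+j" and j="\<lambda>p. (p div b, p mod b)"])
       (use False 1 2 in auto)
  then show ?thesis by (simp add: sum.cartesian_product)
qed

lemma sum_split_mult: fixes f :: "nat \<Rightarrow> 'a::comm_monoid_add" and a b :: nat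
  shows "(\<Sum>p<a*b. f p) = (\<Sum>i<a. \<Sum>j<b. f (i*b+j))"
  using sum_split_divmod[where f="\<lambda>i j. f (i*b+j)" and a=a and b=b] by simp

definition qf :: "nat \<Rightarrow> complex mat \<Rightarrow> (nat \<Rightarrow> complex) \<Rightarrow> complex" where
  "qf d A f = (\<Sum>p<d. \<Sum>q<d. cnj (f p) * A $$ (p,q) * f q)"

lemma quad_vec: assumes "A \<in> carrier_mat d d" "v \<in> carrier_vec d"
  shows "(A *\<^sub>v v) \<bullet>c v = qf d A (\<lambda>i. v $ i)"
proof -
  have "(A *\<^sub>v v) \<bullet>c v = (\<Sum>p<d. (\<Sum>q<d. A $$ (p,q) * v $ q) * cnj (v $ p))"
    using assms unfolding scalar_prod_def mult_mat_vec_def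
    by (auto simp: atLeast0LessThan intro!: sum.cong)
  also have "\<dots> = qf d A (\<lambda>i. v $ i)" unfolding qf_def sum_distrib_right
    by (intro sum.cong refl) (simp add: mult.commute mult.left_commute)
  finally show ?thesis .
qed

lemma qf_cong: "(\<And>i. i < d \<Longrightarrow> f i = g i) \<Longrightarrow> qf d A f = qf d A g"
  unfolding qf_def by (auto intro!: sum.cong)

lemma psd_qf: "psd d A \<longleftrightarrow> A \<in> carrier_mat d d \<and> (\<forall>f. Im (qf d A f) = 0 \<and> 0 \<le> Re (qf d A f))"
proof
  assume a: "psd d A"
  then have A: "A \<in> carrier_mat d d" by (simp add: psd_def)
  show "A \<in> carrier_mat d d \<and> (\<forall>f. Im (qf d A f) = 0 \<and> 0 \<le> Re (qf d A f))"
  proof (intro conjI allI A)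
    fix f
    have "qf d A f = (A *\<^sub>v vec d f) \<bullet>c vec d f"
      by (subst quad_vec[OF A]) (auto intro: qf_cong)
    then show "Im (qf d A f) = 0" "0 \<le> Re (qf d A f)" using a unfolding psd_def Let_def
      by (metis vec_carrier)+
  qed
next
  assume "A \<in> carrier_mat d d \<and> (\<forall>f. Im (qf d A f) = 0 \<and> 0 \<le> Re (qf d A f))"
  then show "psd d A" unfolding psd_def Let_def using quad_vec by auto
qed

lemma cnj_if: "cnj (if P then a else b) = (if P then cnj a else cnj b)" by simp

lemma sum_delta_r: fixes j d :: nat assumes "j < d" shows "(\<Sum>q<d. g q * (if q = j then s else 0)) = g j * (s::complex)"
proof -
  have "(\<Sum>q<d. g q * (if q = j then s else 0)) = (\<Sum>q<d. if q = j then g q * s else 0)"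
    by (rule sum.cong) auto
  also have "\<dots> = g j * s" using assms by (subst sum.delta) auto
  finally show ?thesis .
qed

lemma sum_delta_l: fixes j d :: nat assumes "j < d" shows "(\<Sum>q<d. (if q = j then s else 0) * g q) = s * (g j::complex)"
  using sum_delta_r[OF assms, of g s] by (simp add: mult.commute)

lemma qf_add_unit: fixes j d :: nat assumes "j < d"
  shows "qf d A (\<lambda>p. f p + (if p = j then s else 0)) = qf d A f
    + s * (\<Sum>p<d. cnj (f p) * A$$(p,j)) + cnj s * (\<Sum>q<d. A$$(j,q) * f q) + cnj s * s * A$$(j,j)"
proof -
  let ?e = "\<lambda>q::nat. if q = j then s else 0"
  let ?ce = "\<lambda>q::nat. if q = j then cnj s else 0"
  have e1: "\<And>p. cnj (f p + ?e p) = cnj (f p) + ?ce p" by simp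
  have "qf d A (\<lambda>p. f p + ?e p) =
     (\<Sum>p<d. \<Sum>q<d. (cnj (f p) * A $$ (p,q) * f q + (cnj (f p) * A $$ (p,q)) * ?e q)
        + (?ce p * (A $$ (p,q) * f q) + ?ce p * (A $$ (p,q) * ?e q)))"
    unfolding qf_def e1 by (rule sum.cong[OF refl], rule sum.cong[OF refl]) (simp add: distrib_left distrib_right)
  also have "\<dots> = (\<Sum>p<d. \<Sum>q<d. cnj (f p) * A $$ (p,q) * f q) + (\<Sum>p<d. \<Sum>q<d. (cnj (f p) * A $$ (p,q)) * ?e q)
        + ((\<Sum>p<d. ?ce p * (\<Sum>q<d. A $$ (p,q) * f q)) + (\<Sum>p<d. ?ce p * (\<Sum>q<d. A $$ (p,q) * ?e q)))"
    by (simp only: sum.distrib sum_distrib_left)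
  also have "(\<Sum>p<d. \<Sum>q<d. (cnj (f p) * A $$ (p,q)) * ?e q) = (\<Sum>p<d. (cnj (f p) * A $$ (p,j)) * s)"
    by (rule sum.cong[OF refl]) (rule sum_delta_r[OF assms])
  also have "(\<Sum>p<d. ?ce p * (\<Sum>q<d. A $$ (p,q) * f q)) = cnj s * (\<Sum>q<d. A $$ (j,q) * f q)"
    by (rule sum_delta_l[OF assms])
  also have "(\<Sum>p<d. ?ce p * (\<Sum>q<d. A $$ (p,q) * ?e q)) = cnj s * (\<Sum>q<d. A $$ (j,q) * ?e q)"
    by (rule sum_delta_l[OF assms])
  also have "(\<Sum>q<d. A $$ (j,q) * ?e q) = A $$ (j,j) * s"
    by (rule sum_delta_r[OF assms])
  also have "(\<Sum>p<d. (cnj (f p) * A $$ (p,j)) * s) = s * (\<Sum>p<d. cnj (f p) * A $$ (p,j))"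
    by (subst sum_distrib_left) (simp add: mult.commute)
  also have "cnj s * (A $$ (j,j) * s) = cnj s * s * A $$ (j,j)" by simp
  finally show ?thesis unfolding qf_def by (simp only: add.assoc)
qed


lemma qf_unit: fixes i d :: nat assumes "i < d"
  shows "qf d A (\<lambda>p. if p = i then a else 0) = cnj a * a * A$$(i,i)"
proof -
  have "qf d A (\<lambda>p. if p = i then a else 0) = (\<Sum>p<d. (if p = i then cnj a else 0) * (\<Sum>q<d. A $$ (p,q) * (if q = i then a else 0)))"
    unfolding qf_def by (intro sum.cong refl) (simp add: sum_distrib_left mult.assoc cnj_if)
  also have "\<dots> = cnj a * (\<Sum>q<d. A $$ (i,q) * (if q = i then a else 0))" by (rule sum_delta_l[OF assms])
  also have "(\<Sum>q<d. A $$ (i,q) * (if q = i then a else 0)) = A $$ (i,i) * a" by (rule sum_delta_r[OF assms])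
  finally show ?thesis by simp
qed

lemma qf_two: fixes i j d :: nat assumes "i < d" "j < d" "i \<noteq> j"
  shows "qf d A (\<lambda>p. (if p = i then a else 0) + (if p = j then s else 0)) =
    cnj a * a * A$$(i,i) + s * (cnj a * A$$(i,j)) + cnj s * (A$$(j,i) * a) + cnj s * s * A$$(j,j)"
proof -
  have "(\<Sum>p<d. cnj (if p = i then a else 0) * A$$(p,j)) = cnj a * A$$(i,j)"
    unfolding cnj_if complex_cnj_zero by (rule sum_delta_l[OF assms(1)])
  moreover have "(\<Sum>q<d. A$$(j,q) * (if q = i then a else 0)) = A$$(j,i) * a"
    by (rule sum_delta_r[OF assms(1)])
  ultimately show ?thesis
    using qf_add_unit[OF assms(2), of A "\<lambda>p. if p = i then a else 0" s] qf_unit[OF assms(1), of A a]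
    by simp
qed

lemma psd_carrier: "psd d A \<Longrightarrow> A \<in> carrier_mat d d" by (simp add: psd_def)

lemma psd_diag: assumes "psd d A" "i < d" shows "Im (A$$(i,i)) = 0" "0 \<le> Re (A$$(i,i))"
  using assms qf_unit[OF assms(2), of A 1] unfolding psd_qf by (metis complex_cnj_one mult_1)+

lemma psd_herm: assumes "psd d A" "i < d" "j < d" shows "A$$(j,i) = cnj (A$$(i,j))"
proof (cases "i = j")
  case True then show ?thesis using psd_diag[OF assms(1,2)] by (simp add: complex_eq_iff)
next
  case False
  have q: "Im (qf d A g) = 0" for g using assms(1) unfolding psd_qf by auto
  have 1: "Im (A$$(i,i) + A$$(i,j) + A$$(j,i) + A$$(j,j)) = 0"
    using q[of "\<lambda>p. (if p = i then 1 else 0) + (if p = j then 1 else 0)"] qf_two[OF assms(2,3) False, of A 1 1] by simp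
  have 2: "Im (A$$(i,i) + \<i> * A$$(i,j) - \<i> * A$$(j,i) + A$$(j,j)) = 0"
    using q[of "\<lambda>p. (if p = i then 1 else 0) + (if p = j then \<i> else 0)"] qf_two[OF assms(2,3) False, of A 1 \<i>] by simp
  show ?thesis using 1 2 psd_diag[OF assms(1,2)] psd_diag[OF assms(1,3)] by (simp add: complex_eq_iff)
qed

lemma psd_zero: assumes "psd d A" "i < d" "j < d" "A$$(j,j) = 0" shows "A$$(i,j) = 0" "A$$(j,i) = 0"
proof -
  show "A$$(i,j) = 0"
  proof (cases "i = j")
    case True then show ?thesis using assms by simp
  next
    case False
    show ?thesis
    proof (rule ccontr)
      let ?z = "A$$(i,j)"
      assume nz: "?z \<noteq> 0"
      have pos: "cmod ?z ^ 2 > 0" using nz by simp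
      define t where "t = (Re (A$$(i,i)) + 1) / (2 * cmod ?z ^ 2)"
      define s where "s = - (of_real t * cnj ?z)"
      have h: "A$$(j,i) = cnj ?z" using psd_herm[OF assms(1,2,3)] .
      have "qf d A (\<lambda>p. (if p = i then 1 else 0) + (if p = j then s else 0)) = A$$(i,i) + s * ?z + cnj s * cnj ?z"
        using qf_two[OF assms(2,3) False, of A 1 s] assms(4) h by simp
      also have "s * ?z = - of_real t * (?z * cnj ?z)" unfolding s_def by simp
      also have "cnj s * cnj ?z = - of_real t * (?z * cnj ?z)" unfolding s_def by simp
      finally have e: "qf d A (\<lambda>p. (if p = i then 1 else 0) + (if p = j then s else 0)) =
          A$$(i,i) - 2 * of_real t * of_real (cmod ?z ^ 2)"
        by (simp add: complex_mult_cnj cmod_power2 of_real_power)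
      have "Re (A$$(i,i) - 2 * of_real t * of_real (cmod ?z ^ 2)) = -1"
        using pos unfolding t_def by (simp add: field_simps)
      moreover have "0 \<le> Re (qf d A (\<lambda>p. (if p = i then 1 else 0) + (if p = j then s else 0)))"
        using assms(1) unfolding psd_qf by auto
      ultimately show False using e by simp
    qed
  qed
  then show "A$$(j,i) = 0" using psd_herm[OF assms(1,2,3)] by simp
qed



lemma (in vec_space) rank_ge_li:
  assumes A: "A \<in> carrier_mat n nc" and U: "U \<subseteq> span (set (cols A))" and li: "lin_indpt U"
  shows "card U \<le> rank A"
proof -
  let ?S = "set (cols A)"
  have S: "?S \<subseteq> carrier_vec n" using A cols_dim by blast
  have sub: "submodule class_ring (span ?S) V" using S by (simp add: span_is_submodule)
  interpret W: vectorspace class_ring "span_vs ?S"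
    using S span_is_subspace subspace_def subspace_is_vs by simp
  have fd: "W.fin_dim" using fin_dim_span_cols[OF A] .
  have li2: "W.lin_indpt U" using span_li_not_depend(2)[OF U sub] li by simp
  have "card U \<le> W.dim" using W.li_le_dim(2)[OF fd _ li2] U by simp
  then show ?thesis unfolding rank_def .
qed

lemma (in vec_space) rank_maximal:
  assumes A: "A \<in> carrier_mat n nc"
  obtains B where "B \<subseteq> set (cols A)" "lin_indpt B" "card B = rank A" "finite B"
proof -
  obtain S where S: "maximal S (\<lambda>T. T \<subseteq> set (cols A) \<and> lin_indpt T)"
    using maximal_exists[of "(\<lambda>T. T \<subseteq> set (cols A) \<and> lin_indpt T)" "card (set (cols A))" "{}"]
    by (meson List.finite_set card_mono empty_iff empty_subsetI finite_lin_indpt2 rev_finite_subset)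
  have "rank A = card S" using rank_card_indpt[OF A S] .
  moreover have "S \<subseteq> set (cols A)" "lin_indpt S" using S unfolding maximal_def by auto
  moreover have "finite S" using \<open>S \<subseteq> set (cols A)\<close> finite_subset by blast
  ultimately show ?thesis using that by auto
qed

lemma set_cols_eq: "set (cols A) = col A ` {..<dim_col A}"
  unfolding cols_def by auto

lemma rank_step:
  fixes M :: "complex mat"
  assumes M: "M \<in> carrier_mat d d" and j: "j < d" and mjj: "M$$(j,j) \<noteq> 0"
    and M': "M' = mat d d (\<lambda>(p,q). M$$(p,q) - M$$(p,j)*M$$(j,q)/M$$(j,j))"
  shows "mrank d M' + 1 \<le> mrank d M"
proof -
  interpret vec_space "TYPE(complex)" d .
  have M'c: "M' \<in> carrier_mat d d" using M' by simp
  obtain B where B: "B \<subseteq> set (cols M')" "lin_indpt B" "card B = rank M'" "finite B"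
    using rank_maximal[OF M'c] by blast
  let ?c = "col M j"
  have cc: "?c \<in> carrier_vec d" using M j by simp
  have colsM': "set (cols M') \<subseteq> carrier_vec d" using M'c cols_dim by blast
  have Bc: "B \<subseteq> carrier_vec d" using B colsM' by blast
  have zero_j: "x $ j = 0" if xin: "x \<in> set (cols M')" for x
  proof -
    obtain l where l: "l < d" "x = col M' l" using xin M'c by (auto simp: set_cols_eq)
    show ?thesis using l j mjj M' by simp
  qed
  have span_zero_j: "y $ j = 0" if yin: "y \<in> span B" for y
  proof -
    obtain a A where A: "y = lincomb a A" "finite A" "A \<subseteq> B"
      using yin unfolding span_def by blast
    have "y $ j = (\<Sum>x\<in>A. a x * x $ j)" using A lincomb_index[OF j] Bc by auto
    also have "\<dots> = 0" using A B zero_j by (intro sum.neutral) auto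
    finally show ?thesis .
  qed
  have c_notin: "?c \<notin> span B" using span_zero_j[of ?c] M j mjj by auto
  have c_notinB: "?c \<notin> B" using c_notin in_own_span[OF Bc] by blast
  have li: "lin_indpt (B \<union> {?c})" using lin_dep_iff_in_span[OF Bc B(2) cc c_notinB] c_notin by simp
  have colsM: "set (cols M) \<subseteq> carrier_vec d" using M cols_dim by blast
  have sub: "submodule class_ring (span (set (cols M))) V" using colsM by (simp add: span_is_submodule)
  have cM: "?c \<in> span (set (cols M))"
    using span_mem[OF colsM] M j unfolding set_cols_eq by auto
  have "B \<union> {?c} \<subseteq> span (set (cols M))"
  proof (intro Un_least subsetI)
    fix x assume "x \<in> B"
    then have "x \<in> set (cols M')" using B by blast
    then obtain l where l: "l < d" "x = col M' l" using M'c by (auto simp: set_cols_eq)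
    have cl: "col M l \<in> span (set (cols M))"
      using span_mem[OF colsM] M l unfolding set_cols_eq by auto
    have "x = col M l + (- (M$$(j,l)/M$$(j,j))) \<cdot>\<^sub>v ?c"
      using l M M' j by (intro eq_vecI) (auto simp: field_simps)
    moreover have "(- (M$$(j,l)/M$$(j,j))) \<cdot>\<^sub>v ?c \<in> span (set (cols M))"
      using submodule.smult_closed[OF sub, of "- (M$$(j,l)/M$$(j,j))" ?c] cM by simp
    ultimately show "x \<in> span (set (cols M))"
      using submodule.m_closed[OF sub] cl by simp
  next
    fix x assume "x \<in> {?c}" then show "x \<in> span (set (cols M))" using cM by simp
  qed
  then have "card (B \<union> {?c}) \<le> rank M" using rank_ge_li[OF M _ li] by blast
  moreover have "card (B \<union> {?c}) = rank M' + 1" using B c_notinB by simp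
  ultimately show ?thesis unfolding mrank_def by simp
qed


lemma qf_schur:
  fixes M :: "complex mat"
  assumes j: "j < d" and m0: "M$$(j,j) \<noteq> 0" and mr: "cnj (M$$(j,j)) = M$$(j,j)"
  defines "M' \<equiv> mat d d (\<lambda>(p,q). M$$(p,q) - M$$(p,j)*M$$(j,q)/M$$(j,j))"
  shows "qf d M' f = qf d M (\<lambda>p. f p + (if p = j then - (\<Sum>q<d. M$$(j,q) * f q) / M$$(j,j) else 0))"
proof -
  let ?m = "M$$(j,j)"
  let ?b = "\<Sum>p<d. cnj (f p) * M$$(p,j)"
  let ?g = "\<Sum>q<d. M$$(j,q) * f q"
  have "qf d M' f = (\<Sum>p<d. \<Sum>q<d. cnj (f p) * M$$(p,q) * f q - (cnj (f p) * M$$(p,j)) * (M$$(j,q) * f q) / ?m)"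
    unfolding qf_def M'_def by (intro sum.cong refl) (simp add: algebra_simps)
  also have "\<dots> = qf d M f - ?b * ?g / ?m"
    unfolding qf_def sum_subtractf sum_product sum_divide_distrib by simp
  finally have 1: "qf d M' f = qf d M f - ?b * ?g / ?m" .
  let ?s = "- ?g / ?m"
  have 2: "qf d M (\<lambda>p. f p + (if p = j then ?s else 0)) = qf d M f + ?s * ?b + cnj ?s * ?g + cnj ?s * ?s * ?m"
    by (rule qf_add_unit[OF j])
  have "cnj ?s = - cnj ?g / ?m" using mr by simp
  then have "?s * ?b + cnj ?s * ?g + cnj ?s * ?s * ?m = - ?b * ?g / ?m"
    using m0 by (simp add: field_simps)
  then show ?thesis using 1 2 by simp
qed

lemma chol_aux:
  "\<forall>M. card {i. i < d \<and> M$$(i,i) \<noteq> 0} = N \<longrightarrow> psd d M \<longrightarrow>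
     (\<exists>w. \<forall>p<d. \<forall>q<d. M $$ (p,q) = (\<Sum>l<mrank d M. w l p * cnj (w l q)))"
proof (induction N rule: less_induct)
  case (less N)
  show ?case
  proof (intro allI impI)
    fix M :: "complex mat"
    assume N: "card {i. i < d \<and> M$$(i,i) \<noteq> 0} = N" and psd: "psd d M"
    have Mc: "M \<in> carrier_mat d d" using psd psd_carrier by blast
    show "\<exists>w. \<forall>p<d. \<forall>q<d. M $$ (p,q) = (\<Sum>l<mrank d M. w l p * cnj (w l q))"
    proof (cases "\<exists>j<d. M$$(j,j) \<noteq> 0")
      case False
      then have "M $$ (p,q) = 0" if "p < d" "q < d" for p q
        using psd_zero(1)[OF psd that] False that by blast
      then show ?thesis by (intro exI[of _ "\<lambda>_ _. 0"]) simp
    next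
      case True
      then obtain j where j: "j < d" "M$$(j,j) \<noteq> 0" by blast
      let ?m = "M$$(j,j)"
      have mim: "Im ?m = 0" and mre: "0 \<le> Re ?m" using psd_diag[OF psd j(1)] by auto
      have mr: "cnj ?m = ?m" using mim by (simp add: complex_eq_iff)
      have mpos: "0 < Re ?m" using mim mre j(2) by (metis complex.expand less_eq_real_def zero_complex.simps)
      define M' where "M' = mat d d (\<lambda>(p,q). M$$(p,q) - M$$(p,j)*M$$(j,q)/?m)"
      have M'c: "M' \<in> carrier_mat d d" unfolding M'_def by simp
      have psd': "psd d M'"
        unfolding psd_qf
      proof (intro conjI allI M'c)
        fix f
        have "qf d M' f = qf d M (\<lambda>p. f p + (if p = j then - (\<Sum>q<d. M$$(j,q) * f q) / ?m else 0))"
          unfolding M'_def by (rule qf_schur[OF j mr])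
        then show "Im (qf d M' f) = 0" "0 \<le> Re (qf d M' f)" using psd unfolding psd_qf by auto
      qed
      have sub: "{i. i < d \<and> M'$$(i,i) \<noteq> 0} \<subseteq> {i. i < d \<and> M$$(i,i) \<noteq> 0} - {j}"
      proof
        fix i assume i: "i \<in> {i. i < d \<and> M'$$(i,i) \<noteq> 0}"
        then have id: "i < d" by simp
        have "i \<noteq> j" using i j unfolding M'_def by auto
        moreover have "M$$(i,i) \<noteq> 0"
        proof
          assume z: "M$$(i,i) = 0"
          have "M$$(j,i) = 0" "M$$(i,j) = 0" using psd_zero[OF psd j(1) id z] by auto
          then show False using i id z unfolding M'_def by simp
        qed
        ultimately show "i \<in> {i. i < d \<and> M$$(i,i) \<noteq> 0} - {j}" using id by simp
      qed
      have "card {i. i < d \<and> M'$$(i,i) \<noteq> 0} < N"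
      proof -
        have "card {i. i < d \<and> M'$$(i,i) \<noteq> 0} \<le> card ({i. i < d \<and> M$$(i,i) \<noteq> 0} - {j})"
          by (rule card_mono[OF _ sub]) simp
        also have "\<dots> < card {i. i < d \<and> M$$(i,i) \<noteq> 0}"
          by (rule card_Diff1_less) (use j in auto)
        finally show ?thesis using N by simp
      qed
      then obtain w' where w': "\<And>p q. p < d \<Longrightarrow> q < d \<Longrightarrow> M' $$ (p,q) = (\<Sum>l<mrank d M'. w' l p * cnj (w' l q))"
        using less psd' by blast
      let ?r = "mrank d M'"
      have rle: "?r + 1 \<le> mrank d M" by (rule rank_step[OF Mc j M'_def])
      define sq where "sq = complex_of_real (sqrt (Re ?m))"
      have sq2: "sq * sq = ?m" unfolding sq_def using mre mim
        by (simp add: complex_eq_iff flip: of_real_mult)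
      have sqr: "cnj sq = sq" unfolding sq_def by simp
      define v where "v p = M$$(p,j) / sq" for p
      define w where "w l = (if l < ?r then w' l else if l = ?r then v else (\<lambda>_. 0))" for l
      show ?thesis
      proof (intro exI[of _ w] allI impI)
        fix p q assume p: "p < d" and q: "q < d"
        have "(\<Sum>l<mrank d M. w l p * cnj (w l q)) = (\<Sum>l<Suc ?r. w l p * cnj (w l q))"
          by (rule sum.mono_neutral_right) (use rle in \<open>auto simp: w_def\<close>)
        also have "\<dots> = (\<Sum>l<?r. w' l p * cnj (w' l q)) + v p * cnj (v q)"
          by (simp add: w_def)
        also have "(\<Sum>l<?r. w' l p * cnj (w' l q)) = M' $$ (p,q)" using w'[OF p q] by simp
        also have "v p * cnj (v q) = M$$(p,j) * M$$(j,q) / ?m"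
          unfolding v_def using psd_herm[OF psd q j(1)] sq2 sqr by simp
        finally show "M $$ (p,q) = (\<Sum>l<mrank d M. w l p * cnj (w l q))"
          unfolding M'_def using p q by simp
      qed
    qed
  qed
qed

lemma chol:
  assumes "psd d M"
  shows "\<exists>w. \<forall>p<d. \<forall>q<d. M $$ (p,q) = (\<Sum>l<mrank d M. w l p * cnj (w l q))"
  using chol_aux assms by blast

lemma chol_k:
  assumes "psd d M" "mrank d M \<le> k"
  shows "\<exists>w. \<forall>p<d. \<forall>q<d. M $$ (p,q) = (\<Sum>l<k. w l p * cnj (w l q))"
proof -
  obtain w where w: "\<forall>p<d. \<forall>q<d. M $$ (p,q) = (\<Sum>l<mrank d M. w l p * cnj (w l q))"
    using chol[OF assms(1)] by blast
  define w2 where "w2 l = (if l < mrank d M then w l else (\<lambda>_. 0))" for l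
  have "(\<Sum>l<k. w2 l p * cnj (w2 l q)) = (\<Sum>l<mrank d M. w l p * cnj (w l q))" for p q
  proof -
    have "(\<Sum>l<k. w2 l p * cnj (w2 l q)) = (\<Sum>l<mrank d M. w2 l p * cnj (w2 l q))"
      by (rule sum.mono_neutral_right) (use assms(2) in \<open>auto simp: w2_def\<close>)
    also have "\<dots> = (\<Sum>l<mrank d M. w l p * cnj (w l q))" by (intro sum.cong) (auto simp: w2_def)
    finally show ?thesis .
  qed
  then show ?thesis using w by metis
qed



definition osum :: "nat \<Rightarrow> 'a set \<Rightarrow> ('a \<Rightarrow> nat \<Rightarrow> complex) \<Rightarrow> complex mat" where
  "osum d T ws = mat d d (\<lambda>(p,q). \<Sum>t\<in>T. ws t p * cnj (ws t q))"

lemma osum_carrier[simp]: "osum d T ws \<in> carrier_mat d d"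
  unfolding osum_def by simp

lemma osum_index[simp]: "p < d \<Longrightarrow> q < d \<Longrightarrow> osum d T ws $$ (p,q) = (\<Sum>t\<in>T. ws t p * cnj (ws t q))"
  unfolding osum_def by simp

lemma osum_dim[simp]: "dim_row (osum d T ws) = d" "dim_col (osum d T ws) = d"
  unfolding osum_def by simp_all

lemma qf_osum: "qf d (osum d T ws) f = (\<Sum>t\<in>T. (\<Sum>p<d. cnj (f p) * ws t p) * cnj (\<Sum>p<d. cnj (f p) * ws t p))"
proof -
  have "qf d (osum d T ws) f = (\<Sum>p<d. \<Sum>q<d. \<Sum>t\<in>T. (cnj (f p) * ws t p) * (cnj (ws t q) * f q))"
    unfolding qf_def by (intro sum.cong refl) (simp add: sum_distrib_left sum_distrib_right mult.assoc)
  also have "\<dots> = (\<Sum>p<d. \<Sum>t\<in>T. \<Sum>q<d. (cnj (f p) * ws t p) * (cnj (ws t q) * f q))"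
    by (intro sum.cong refl) (rule sum.swap)
  also have "\<dots> = (\<Sum>t\<in>T. \<Sum>p<d. \<Sum>q<d. (cnj (f p) * ws t p) * (cnj (ws t q) * f q))"
    by (rule sum.swap)
  also have "\<dots> = (\<Sum>t\<in>T. (\<Sum>p<d. cnj (f p) * ws t p) * cnj (\<Sum>p<d. cnj (f p) * ws t p))"
    by (intro sum.cong refl) (simp only: cnj_sum sum_product, simp add: algebra_simps)
  finally show ?thesis .
qed

lemma mult_cnj_self: "z * cnj z = complex_of_real ((cmod z)^2)"
  by (simp add: complex_mult_cnj cmod_power2)

lemma psd_osum: "finite T \<Longrightarrow> psd d (osum d T ws)"
  unfolding psd_qf qf_osum mult_cnj_self
  by (auto simp: Re_sum Im_sum intro!: sum_nonneg simp flip: of_real_sum)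

lemma osum_Suc: "osum d {..<Suc K} ws = osum d {..<K} ws + osum d {K} ws"
  by (intro eq_matI) (auto simp: osum_def)

lemma rank_outer1: "mrank d (osum d {K} ws) \<le> 1"
  unfolding mrank_def
  by (rule vec_space.rank_le_1_product_entries[where f="ws K" and g="\<lambda>q. cnj (ws K q)"]) auto

lemma rank_osum: "mrank d (osum d {..<K} ws) \<le> K"
proof (induction K)
  case 0
  have "osum d {..<0} ws = 0\<^sub>m d d" by (intro eq_matI) (auto simp: osum_def)
  then show ?case unfolding mrank_def using vec_space.rank_0I by (metis le_refl)
next
  case (Suc K)
  have "mrank d (osum d {..<Suc K} ws) \<le> mrank d (osum d {..<K} ws) + mrank d (osum d {K} ws)"
    unfolding osum_Suc mrank_def by (rule vec_space.rank_subadditive) auto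
  then show ?case using Suc rank_outer1[of d K ws] by linarith
qed

lemma lin_mapD:
  assumes "lin_map_mat d1 d2 L"
  shows "\<And>A. A \<in> carrier_mat d1 d1 \<Longrightarrow> L A \<in> carrier_mat d2 d2"
    "\<And>A B. A \<in> carrier_mat d1 d1 \<Longrightarrow> B \<in> carrier_mat d1 d1 \<Longrightarrow> L (A + B) = L A + L B"
    "\<And>c A. A \<in> carrier_mat d1 d1 \<Longrightarrow> L (c \<cdot>\<^sub>m A) = c \<cdot>\<^sub>m L A"
  using assms unfolding lin_map_mat_def by auto

lemma lin_map_zero:
  assumes "lin_map_mat d1 d2 L" shows "L (0\<^sub>m d1 d1) = 0\<^sub>m d2 d2"
proof -
  have z: "0 \<cdot>\<^sub>m 0\<^sub>m d1 d1 = (0\<^sub>m d1 d1 :: complex mat)" by (intro eq_matI) auto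
  have "L (0 \<cdot>\<^sub>m 0\<^sub>m d1 d1) = 0 \<cdot>\<^sub>m L (0\<^sub>m d1 d1)" by (rule lin_mapD(3)[OF assms]) simp
  then have e: "L (0\<^sub>m d1 d1) = 0 \<cdot>\<^sub>m L (0\<^sub>m d1 d1)" unfolding z .
  have "0 \<cdot>\<^sub>m L (0\<^sub>m d1 d1) = 0\<^sub>m d2 d2" using lin_mapD(1)[OF assms, of "0\<^sub>m d1 d1"] by (intro eq_matI) auto
  then show ?thesis using e by simp
qed

lemma lin_map_sum:
  assumes L: "lin_map_mat d1 d2 L" and T: "finite T" and A: "\<And>t. t \<in> T \<Longrightarrow> A t \<in> carrier_mat d1 d1"
  shows "L (mat d1 d1 (\<lambda>x. \<Sum>t\<in>T. c t * A t $$ x)) = mat d2 d2 (\<lambda>x. \<Sum>t\<in>T. c t * L (A t) $$ x)"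
  using T A
proof (induction T rule: finite_induct)
  case empty
  have "mat d1 d1 (\<lambda>x. \<Sum>t\<in>{}. c t * A t $$ x) = 0\<^sub>m d1 d1" by (intro eq_matI) auto
  moreover have "mat d2 d2 (\<lambda>x. \<Sum>t\<in>{}. c t * L (A t) $$ x) = 0\<^sub>m d2 d2" by (intro eq_matI) auto
  ultimately show ?case using lin_map_zero[OF L] by simp
next
  case (insert s T)
  have As: "A s \<in> carrier_mat d1 d1" using insert by simp
  have LAs: "L (A s) \<in> carrier_mat d2 d2" using lin_mapD(1)[OF L As] .
  have "mat d1 d1 (\<lambda>x. \<Sum>t\<in>insert s T. c t * A t $$ x) = c s \<cdot>\<^sub>m A s + mat d1 d1 (\<lambda>x. \<Sum>t\<in>T. c t * A t $$ x)"
    using insert(1,2) As by (intro eq_matI) auto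
  then have "L (mat d1 d1 (\<lambda>x. \<Sum>t\<in>insert s T. c t * A t $$ x)) =
     c s \<cdot>\<^sub>m L (A s) + mat d2 d2 (\<lambda>x. \<Sum>t\<in>T. c t * L (A t) $$ x)"
    using lin_mapD(2)[OF L, of "c s \<cdot>\<^sub>m A s" "mat d1 d1 (\<lambda>x. \<Sum>t\<in>T. c t * A t $$ x)"]
      lin_mapD(3)[OF L As] insert As by simp
  also have "\<dots> = mat d2 d2 (\<lambda>x. \<Sum>t\<in>insert s T. c t * L (A t) $$ x)"
    using insert(1,2) LAs by (intro eq_matI) auto
  finally show ?case .
qed

lemma idx_bound: fixes i l n k :: nat assumes "i < n" "l < k" shows "i*k+l < n*k"
proof -
  have "i*k+l < i*k + k" using assms by simp
  also have "\<dots> = Suc i * k" by simp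
  also have "\<dots> \<le> n*k" using assms by (intro mult_le_mono1) simp
  finally show ?thesis .
qed

lemma ptrace2_carrier[simp]: "ptrace2 n k A \<in> carrier_mat n n"
  unfolding ptrace2_def by simp

lemma lin_map_ptrace2:
  assumes "lin_map_mat n m L"
  shows "lin_map_mat (n*k) m (\<lambda>\<rho>. L (ptrace2 n k \<rho>))"
proof -
  have add: "ptrace2 n k (A + B) = ptrace2 n k A + ptrace2 n k B"
    if "A \<in> carrier_mat (n*k) (n*k)" "B \<in> carrier_mat (n*k) (n*k)" for A B
    using that idx_bound by (intro eq_matI) (auto simp: ptrace2_def sum.distrib)
  have sm: "ptrace2 n k (c \<cdot>\<^sub>m A) = c \<cdot>\<^sub>m ptrace2 n k A"
    if "A \<in> carrier_mat (n*k) (n*k)" for c A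
    using that idx_bound by (intro eq_matI) (auto simp: ptrace2_def sum_distrib_left)
  show ?thesis unfolding lin_map_mat_def
    using lin_mapD[OF assms] add sm by simp
qed



definition tens :: "nat \<Rightarrow> (nat \<Rightarrow> complex) \<Rightarrow> nat \<Rightarrow> complex" where
  "tens d f p = f (p div d) * f (p mod d)"

definition nrm :: "nat \<Rightarrow> (nat \<Rightarrow> complex) \<Rightarrow> complex" where
  "nrm d f = (\<Sum>a<d. f a * cnj (f a))"

definition outer :: "nat \<Rightarrow> (nat \<Rightarrow> complex) \<Rightarrow> complex mat" where
  "outer d f = mat d d (\<lambda>(p,q). f p * cnj (f q))"

lemma dm_simps[simp]: fixes a b d :: nat assumes "b < d" shows "(a*d+b) div d = a" "(a*d+b) mod d = b"
  using assms by auto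

lemma kron_dims[simp]: "dim_row (kron A B) = dim_row A * dim_row B" "dim_col (kron A B) = dim_col A * dim_col B"
  unfolding kron_def by simp_all

lemma kron_carrier: "A \<in> carrier_mat a a \<Longrightarrow> B \<in> carrier_mat b b \<Longrightarrow> kron A B \<in> carrier_mat (a*b) (a*b)"
  by auto

lemma kron_index: "i < dim_row A * dim_row B \<Longrightarrow> j < dim_col A * dim_col B \<Longrightarrow>
   kron A B $$ (i,j) = A $$ (i div dim_row B, j div dim_col B) * B $$ (i mod dim_row B, j mod dim_col B)"
  unfolding kron_def by simp

lemma mtrace_mult: assumes "K \<in> carrier_mat D D" "B \<in> carrier_mat D D"
  shows "mtrace (K * B) = (\<Sum>p<D. \<Sum>q<D. K $$ (p,q) * B $$ (q,p))"
  using assms unfolding mtrace_def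
  by (auto simp: atLeast0LessThan scalar_prod_def intro!: sum.cong)

lemma mtrace_mult_osum: assumes "K \<in> carrier_mat D D"
  shows "mtrace (K * osum D T zs) = (\<Sum>t\<in>T. qf D K (zs t))"
proof -
  have "mtrace (K * osum D T zs) = (\<Sum>p<D. \<Sum>q<D. \<Sum>t\<in>T. cnj (zs t p) * K $$ (p,q) * zs t q)"
    unfolding mtrace_mult[OF assms osum_carrier]
    by (intro sum.cong refl) (simp add: sum_distrib_left mult.commute mult.left_commute)
  also have "\<dots> = (\<Sum>p<D. \<Sum>t\<in>T. \<Sum>q<D. cnj (zs t p) * K $$ (p,q) * zs t q)"
    by (intro sum.cong refl) (rule sum.swap)
  also have "\<dots> = (\<Sum>t\<in>T. qf D K (zs t))"
    unfolding qf_def by (rule sum.swap)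
  finally show ?thesis .
qed

lemma mtrace_osum: "mtrace (osum D T zs) = (\<Sum>t\<in>T. nrm D (zs t))"
  unfolding mtrace_def nrm_def by (simp add: sum.swap[of _ "{..<D}"])

lemma nrm_tens: "nrm (d*d) (tens d f) = nrm d f * nrm d f"
  unfolding nrm_def tens_def
  by (subst sum_split_divmod[where f="\<lambda>a b. f a * f b * cnj (f a * f b)"]) (simp add: sum_product algebra_simps)

lemma qf_kron_id:
  assumes A: "A \<in> carrier_mat a a"
  shows "qf (a*b) (kron A (1\<^sub>m b)) f = (\<Sum>i<a. \<Sum>i'<a. A$$(i,i') * (\<Sum>l<b. cnj (f (i*b+l)) * f (i'*b+l)))"
proof -
  have "qf (a*b) (kron A (1\<^sub>m b)) f =
     (\<Sum>i<a. \<Sum>l<b. \<Sum>i'<a. \<Sum>l'<b. cnj (f (i*b+l)) * (A$$(i,i') * (if l = l' then 1 else 0)) * f (i'*b+l'))"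
    unfolding qf_def sum_split_mult[where a=a and b=b]
    using A idx_bound by (intro sum.cong refl) (auto simp: kron_index)
  also have "\<dots> = (\<Sum>i<a. \<Sum>l<b. \<Sum>i'<a. cnj (f (i*b+l)) * A$$(i,i') * f (i'*b+l))"
    by (intro sum.cong refl) (simp add: if_distrib if_distribR sum.delta cong: if_cong)
  also have "\<dots> = (\<Sum>i<a. \<Sum>i'<a. \<Sum>l<b. cnj (f (i*b+l)) * A$$(i,i') * f (i'*b+l))"
    by (rule sum.cong[OF refl], rule sum.swap)
  also have "\<dots> = (\<Sum>i<a. \<Sum>i'<a. A$$(i,i') * (\<Sum>l<b. cnj (f (i*b+l)) * f (i'*b+l)))"
    by (intro sum.cong refl) (simp add: sum_distrib_left mult.commute mult.left_commute)
  finally show ?thesis .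
qed


lemma outer_carrier[simp]: "outer d f \<in> carrier_mat d d" unfolding outer_def by simp

lemma ptrace2_outer: "ptrace2 n k (outer (n*k) f) = osum n {..<k} (\<lambda>l i. f (i*k+l))"
  by (intro eq_matI) (auto simp: ptrace2_def outer_def osum_def idx_bound)

lemma mtrace_ptrace2_outer: "mtrace (ptrace2 n k (outer (n*k) f)) = nrm (n*k) f"
  unfolding ptrace2_outer mtrace_osum nrm_def sum_split_mult[where a=n and b=k]
  by (rule sum.swap)

lemma qf_tens: "qf (d*d) (kron A (1\<^sub>m d)) (tens d f) = nrm d f * qf d A f" if A: "A \<in> carrier_mat d d"
proof -
  have "qf (d*d) (kron A (1\<^sub>m d)) (tens d f) =
     (\<Sum>a<d. \<Sum>a'<d. A$$(a,a') * (\<Sum>l<d. cnj (tens d f (a*d+l)) * tens d f (a'*d+l)))"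
    by (rule qf_kron_id[OF A])
  also have "\<dots> = (\<Sum>a<d. \<Sum>a'<d. nrm d f * (cnj (f a) * A$$(a,a') * f a'))"
    unfolding nrm_def tens_def
    by (intro sum.cong refl) (simp add: sum_distrib_left sum_distrib_right mult.commute mult.left_commute)
  also have "\<dots> = nrm d f * qf d A f" unfolding qf_def by (simp add: sum_distrib_left)
  finally show ?thesis .
qed

lemma qf_kron_X: assumes X: "X \<in> carrier_mat n n"
  shows "qf (n*k) (kron X (1\<^sub>m k)) f = mtrace (X * ptrace2 n k (outer (n*k) f))"
proof -
  have "mtrace (X * ptrace2 n k (outer (n*k) f)) = (\<Sum>i<n. \<Sum>i'<n. X $$ (i,i') * ptrace2 n k (outer (n*k) f) $$ (i',i))"
    by (rule mtrace_mult[OF X ptrace2_carrier])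
  also have "\<dots> = (\<Sum>i<n. \<Sum>i'<n. X$$(i,i') * (\<Sum>l<k. cnj (f (i*k+l)) * f (i'*k+l)))"
    unfolding ptrace2_outer by (intro sum.cong refl) (simp add: mult.commute)
  finally show ?thesis using qf_kron_id[OF X, of k f] by simp
qed

lemma obj_osum:
  assumes X: "X \<in> carrier_mat n n"
  shows "mtrace (kron (kron X (1\<^sub>m k)) (1\<^sub>m (n*k)) * osum ((n*k)*(n*k)) T (\<lambda>t. tens (n*k) (ps t)))
    = (\<Sum>t\<in>T. nrm (n*k) (ps t) * mtrace (X * ptrace2 n k (outer (n*k) (ps t))))"
proof -
  have Xt: "kron X (1\<^sub>m k) \<in> carrier_mat (n*k) (n*k)" using X by auto
  have K: "kron (kron X (1\<^sub>m k)) (1\<^sub>m (n*k)) \<in> carrier_mat ((n*k)*(n*k)) ((n*k)*(n*k))" by (rule kron_carrier[OF Xt]) simp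
  show ?thesis unfolding mtrace_mult_osum[OF K] qf_tens[OF Xt] qf_kron_X[OF X] ..
qed

lemma ptrace1_osum:
  "ptrace1 d d (osum (d*d) T (\<lambda>t. tens d (ps t))) = mat d d (\<lambda>(b,b'). \<Sum>t\<in>T. nrm d (ps t) * (ps t b * cnj (ps t b')))"
proof (intro eq_matI)
  fix b b' assume b: "b < dim_row (mat d d (\<lambda>(b,b'). \<Sum>t\<in>T. nrm d (ps t) * (ps t b * cnj (ps t b'))))"
    and b': "b' < dim_col (mat d d (\<lambda>(b,b'). \<Sum>t\<in>T. nrm d (ps t) * (ps t b * cnj (ps t b'))))"
  then have bd: "b < d" "b' < d" by auto
  have "ptrace1 d d (osum (d*d) T (\<lambda>t. tens d (ps t))) $$ (b,b') =
      (\<Sum>l<d. \<Sum>t\<in>T. (ps t l * cnj (ps t l)) * (ps t b * cnj (ps t b')))"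
    unfolding ptrace1_def using bd idx_bound
    by (auto simp: tens_def intro!: sum.cong simp: mult.commute mult.left_commute)
  also have "\<dots> = (\<Sum>t\<in>T. nrm d (ps t) * (ps t b * cnj (ps t b')))"
    unfolding nrm_def by (subst sum.swap) (simp add: sum_distrib_right)
  finally show "ptrace1 d d (osum (d*d) T (\<lambda>t. tens d (ps t))) $$ (b,b') =
      mat d d (\<lambda>(b,b'). \<Sum>t\<in>T. nrm d (ps t) * (ps t b * cnj (ps t b'))) $$ (b,b')" using bd by simp
qed (auto simp: ptrace1_def)

lemma map_tensor_osum:
  assumes L: "lin_map_mat d m L" and T: "finite T"
  shows "map_tensor_id d d m L (osum (d*d) T (\<lambda>t. tens d (ps t))) =
    mat (m*d) (m*d) (\<lambda>(i,j). \<Sum>t\<in>T. (ps t (i mod d) * cnj (ps t (j mod d))) * L (outer d (ps t)) $$ (i div d, j div d))"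
proof (intro eq_matI)
  fix i j assume "i < dim_row (mat (m*d) (m*d) (\<lambda>(i,j). \<Sum>t\<in>T. (ps t (i mod d) * cnj (ps t (j mod d))) * L (outer d (ps t)) $$ (i div d, j div d)))"
    "j < dim_col (mat (m*d) (m*d) (\<lambda>(i,j). \<Sum>t\<in>T. (ps t (i mod d) * cnj (ps t (j mod d))) * L (outer d (ps t)) $$ (i div d, j div d)))"
  then have ij: "i < m*d" "j < m*d" by auto
  then have d0: "0 < d" by (metis mult_is_0 not_gr_zero not_less_zero)
  have im: "i mod d < d" "j mod d < d" using d0 by auto
  have idv: "i div d < m" "j div d < m" using ij by (auto simp: less_mult_imp_div_less)
  let ?c = "\<lambda>t. ps t (i mod d) * cnj (ps t (j mod d))"
  have blk: "mat d d (\<lambda>(a, a'). osum (d*d) T (\<lambda>t. tens d (ps t)) $$ (a * d + i mod d, a' * d + j mod d))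
      = mat d d (\<lambda>x. \<Sum>t\<in>T. ?c t * outer d (ps t) $$ x)"
    using im idx_bound by (intro eq_matI) (auto simp: tens_def outer_def intro!: sum.cong simp: mult.commute mult.left_commute)
  show "map_tensor_id d d m L (osum (d*d) T (\<lambda>t. tens d (ps t))) $$ (i,j) =
    mat (m*d) (m*d) (\<lambda>(i,j). \<Sum>t\<in>T. (ps t (i mod d) * cnj (ps t (j mod d))) * L (outer d (ps t)) $$ (i div d, j div d)) $$ (i,j)"
    unfolding map_tensor_id_def using ij idv
    by (simp add: blk lin_map_sum[OF L T outer_carrier])
qed (auto simp: map_tensor_id_def)



definition sig :: "nat \<Rightarrow> nat \<Rightarrow> nat" where "sig d p = (p mod d) * d + p div d"

lemma sig_bound: fixes p d :: nat assumes "p < d*d" shows "sig d p < d*d"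
proof -
  have d0: "0 < d" using assms by (metis mult_is_0 not_gr_zero not_less_zero)
  have "p div d < d" using assms by (simp add: less_mult_imp_div_less)
  then show ?thesis unfolding sig_def using idx_bound[of "p mod d" d "p div d" d] d0 by simp
qed

lemma sig_divmod: fixes p d :: nat assumes "p < d*d" shows "sig d p div d = p mod d" "sig d p mod d = p div d"
proof -
  have "p div d < d" using assms by (simp add: less_mult_imp_div_less)
  then show "sig d p div d = p mod d" "sig d p mod d = p div d" unfolding sig_def by simp_all
qed

lemma sig_sig: fixes p d :: nat assumes "p < d*d" shows "sig d (sig d p) = p"
  using sig_divmod[OF assms] unfolding sig_def[of d "sig d p"] by simp

lemma swap_mult_index:
  assumes Phi: "Phi \<in> carrier_mat (d*d) (d*d)" and p: "p < d*d" and q: "q < d*d"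
  shows "(swap_op d * Phi) $$ (p,q) = Phi $$ (sig d p, q)"
proof -
  have "(swap_op d * Phi) $$ (p,q) = (\<Sum>s<d*d. (if p = sig d s then 1 else 0) * Phi $$ (s,q))"
    using Phi p q unfolding swap_op_def sig_def
    by (auto simp: scalar_prod_def atLeast0LessThan intro!: sum.cong)
  also have "\<dots> = (\<Sum>s<d*d. (if s = sig d p then 1 else 0) * Phi $$ (s,q))"
  proof (intro sum.cong refl)
    fix s assume "s \<in> {..<d*d}"
    then have s': "s < d*d" by simp
    have "p = sig d s \<longleftrightarrow> s = sig d p" using sig_sig[OF s'] sig_sig[OF p] by auto
    then show "(if p = sig d s then 1 else 0) * Phi $$ (s,q) = (if s = sig d p then 1 else 0) * Phi $$ (s,q)" by simp
  qed
  also have "\<dots> = Phi $$ (sig d p, q)"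
    using sum_delta_l[OF sig_bound[OF p], of 1 "\<lambda>s. Phi $$ (s,q)"] by simp
  finally show ?thesis .
qed

lemma outer_osum: "outer d f = osum d {0::nat} (\<lambda>_. f)"
  by (intro eq_matI) (auto simp: outer_def osum_def)

lemma psd_outer: "psd d (outer d f)"
  unfolding outer_osum by (rule psd_osum) simp

lemma tens_sig: "p < d*d \<Longrightarrow> tens d f (sig d p) = tens d f p"
  unfolding tens_def using sig_divmod by simp

lemma con_single:
  assumes L: "lin_map_mat d m L" and Y: "Y \<in> carrier_mat m m" and LY: "L (outer d \<psi>) = Y" and n1: "nrm d \<psi> = 1"
  shows "map_tensor_id d d m L (osum (d*d) {0::nat} (\<lambda>_. tens d \<psi>)) = kron Y (ptrace1 d d (osum (d*d) {0::nat} (\<lambda>_. tens d \<psi>)))"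
proof -
  have 1: "map_tensor_id d d m L (osum (d*d) {0::nat} (\<lambda>_. tens d \<psi>)) =
    mat (m*d) (m*d) (\<lambda>(i,j). (\<psi> (i mod d) * cnj (\<psi> (j mod d))) * Y $$ (i div d, j div d))"
    using map_tensor_osum[OF L, where T="{0::nat}" and ps="\<lambda>_. \<psi>"] LY by simp
  have 2: "ptrace1 d d (osum (d*d) {0::nat} (\<lambda>_. tens d \<psi>)) = mat d d (\<lambda>(b,b'). \<psi> b * cnj (\<psi> b'))"
    using ptrace1_osum[where T="{0::nat}" and ps="\<lambda>_. \<psi>"] n1 by simp
  show ?thesis unfolding 1 2
  proof (intro eq_matI)
    fix i j assume "i < dim_row (kron Y (mat d d (\<lambda>(b,b'). \<psi> b * cnj (\<psi> b'))))"
      "j < dim_col (kron Y (mat d d (\<lambda>(b,b'). \<psi> b * cnj (\<psi> b'))))"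
    then have ij: "i < m*d" "j < m*d" using Y by auto
    then have d0: "0 < d" by (metis mult_is_0 not_gr_zero not_less_zero)
    have im: "i mod d < d" "j mod d < d" using d0 by auto
    have idv: "i div d < m" "j div d < m" using ij by (auto simp: less_mult_imp_div_less)
    show "mat (m*d) (m*d) (\<lambda>(i,j). (\<psi> (i mod d) * cnj (\<psi> (j mod d))) * Y $$ (i div d, j div d)) $$ (i,j) =
       kron Y (mat d d (\<lambda>(b,b'). \<psi> b * cnj (\<psi> b'))) $$ (i,j)"
      using ij im idv Y by (simp add: kron_index mult.commute)
  qed (use Y in auto)
qed

lemma dir1:
  fixes n m k :: nat and X Y \<rho> :: "complex mat" and \<Lambda> :: "complex mat \<Rightarrow> complex mat"
  assumes X: "X \<in> carrier_mat n n" and L: "lin_map_mat n m \<Lambda>" and Y: "Y \<in> carrier_mat m m"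
    and rho: "\<rho> \<in> carrier_mat n n" "\<Lambda> \<rho> = Y" "mtrace \<rho> = 1" "psd n \<rho>" "mrank n \<rho> \<le> k"
  defines "d \<equiv> n * k"
  shows "\<exists>\<Phi>. \<Phi> \<in> SEP d d \<and> mtrace \<Phi> = 1 \<and> swap_op d * \<Phi> = \<Phi> \<and>
        map_tensor_id d d m (\<lambda>\<rho>. \<Lambda> (ptrace2 n k \<rho>)) \<Phi> = kron Y (ptrace1 d d \<Phi>) \<and>
        mtrace (kron (kron X (1\<^sub>m k)) (1\<^sub>m d) * \<Phi>) = mtrace (X * \<rho>)"
proof -
  obtain w where w: "\<And>p q. p < n \<Longrightarrow> q < n \<Longrightarrow> \<rho> $$ (p,q) = (\<Sum>l<k. w l p * cnj (w l q))"
    using chol_k[OF rho(4,5)] by blast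
  define \<psi> where "\<psi> a = w (a mod k) (a div k)" for a
  have pt: "ptrace2 n k (outer d \<psi>) = \<rho>"
    unfolding d_def ptrace2_outer using rho(1) w by (intro eq_matI) (auto simp: osum_def \<psi>_def)
  have nrm1: "nrm d \<psi> = 1" using mtrace_ptrace2_outer[of n k \<psi>] pt rho(3) unfolding d_def by simp
  define \<Phi> where "\<Phi> = osum (d*d) {0::nat} (\<lambda>_. tens d \<psi>)"
  have Phic: "\<Phi> \<in> carrier_mat (d*d) (d*d)" unfolding \<Phi>_def by simp
  have sep: "\<Phi> \<in> SEP d d"
    unfolding SEP_def
  proof (intro CollectI exI conjI allI impI)
    show "psd d (outer d \<psi>)" "psd d (outer d \<psi>)" by (rule psd_outer)+
    show "\<Phi> = mat (d * d) (d * d) (\<lambda>ij. \<Sum>i<(1::nat). kron (outer d \<psi>) (outer d \<psi>) $$ ij)"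
      unfolding \<Phi>_def
    proof (intro eq_matI)
      fix p q assume "p < dim_row (mat (d * d) (d * d) (\<lambda>ij. \<Sum>i<(1::nat). kron (outer d \<psi>) (outer d \<psi>) $$ ij))"
        "q < dim_col (mat (d * d) (d * d) (\<lambda>ij. \<Sum>i<(1::nat). kron (outer d \<psi>) (outer d \<psi>) $$ ij))"
      then have pq: "p < d*d" "q < d*d" by auto
      then have d0: "0 < d" by (metis mult_is_0 not_gr_zero not_less_zero)
      have b: "p div d < d" "q div d < d" "p mod d < d" "q mod d < d"
        using pq d0 by (auto simp: less_mult_imp_div_less)
      have "kron (outer d \<psi>) (outer d \<psi>) $$ (p,q) = outer d \<psi> $$ (p div d, q div d) * outer d \<psi> $$ (p mod d, q mod d)"
        using pq by (simp add: kron_index outer_def)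
      also have "\<dots> = tens d \<psi> p * cnj (tens d \<psi> q)" using b by (simp add: outer_def tens_def)
      finally show "osum (d * d) {0} (\<lambda>_. tens d \<psi>) $$ (p, q) =
        mat (d * d) (d * d) (\<lambda>ij. \<Sum>i<(1::nat). kron (outer d \<psi>) (outer d \<psi>) $$ ij) $$ (p, q)"
        using pq by (simp add: lessThan_Suc card_lessThan)
    qed auto
  qed
  have tr: "mtrace \<Phi> = 1" unfolding \<Phi>_def mtrace_osum nrm_tens nrm1 by simp
  have sw: "swap_op d * \<Phi> = \<Phi>"
  proof (intro eq_matI)
    fix p q assume "p < dim_row \<Phi>" "q < dim_col \<Phi>"
    then have pq: "p < d*d" "q < d*d" using Phic by auto
    show "(swap_op d * \<Phi>) $$ (p,q) = \<Phi> $$ (p,q)"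
      unfolding swap_mult_index[OF Phic pq] using pq sig_bound[OF pq(1)] tens_sig[OF pq(1)]
      unfolding \<Phi>_def by simp
  qed (use Phic in \<open>auto simp: swap_op_def\<close>)
  have Lt: "lin_map_mat d m (\<lambda>\<rho>. \<Lambda> (ptrace2 n k \<rho>))" unfolding d_def by (rule lin_map_ptrace2[OF L])
  have con: "map_tensor_id d d m (\<lambda>\<rho>. \<Lambda> (ptrace2 n k \<rho>)) \<Phi> = kron Y (ptrace1 d d \<Phi>)"
    unfolding \<Phi>_def
    by (rule con_single[OF Lt Y _ nrm1]) (simp add: pt rho(2))
  have ob: "mtrace (kron (kron X (1\<^sub>m k)) (1\<^sub>m d) * \<Phi>) = mtrace (X * \<rho>)"
    unfolding \<Phi>_def d_def using obj_osum[OF X, where T="{0::nat}" and ps="\<lambda>_. \<psi>"] pt nrm1 unfolding d_def by simp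
  show ?thesis using sep tr sw con ob by blast
qed



lemma kron_index_c:
  assumes "A \<in> carrier_mat a a" "B \<in> carrier_mat b b" "i < a*b" "j < a*b"
  shows "kron A B $$ (i,j) = A $$ (i div b, j div b) * B $$ (i mod b, j mod b)"
  using assms kron_index[of i A B j] by auto

lemma sep_decomp:
  assumes "\<Phi> \<in> SEP d d"
  shows "\<exists>T::(nat \<times> nat \<times> nat) set. \<exists>zs. finite T \<and> \<Phi> = osum (d*d) T zs \<and>
     (\<exists>u w. \<forall>t p. zs t p = u t (p div d) * w t (p mod d))"
proof -
  obtain r :: nat and M N where MN: "\<forall>i<r. psd d (M i) \<and> psd d (N i)"
    and Phi: "\<Phi> = mat (d * d) (d * d) (\<lambda>ij. \<Sum>i<r. kron (M i) (N i) $$ ij)"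
    using assms unfolding SEP_def by blast
  have ex: "\<exists>W. \<forall>p<d. \<forall>q<d. A $$ (p,q) = (\<Sum>l<d. W l p * cnj (W l q))" if "psd d A" for A
  proof -
    have "mrank d A \<le> d" unfolding mrank_def
      using vec_space.rank_le_nc[OF psd_carrier[OF that]] .
    then show ?thesis using chol_k[OF that] by blast
  qed
  have "\<forall>i. \<exists>W. i < r \<longrightarrow> (\<forall>p<d. \<forall>q<d. M i $$ (p,q) = (\<Sum>l<d. W l p * cnj (W l q)))"
    using ex MN by blast
  then obtain WM where WM: "\<And>i p q. i < r \<Longrightarrow> p < d \<Longrightarrow> q < d \<Longrightarrow> M i $$ (p,q) = (\<Sum>l<d. WM i l p * cnj (WM i l q))"
    by (metis choice)
  have "\<forall>i. \<exists>W. i < r \<longrightarrow> (\<forall>p<d. \<forall>q<d. N i $$ (p,q) = (\<Sum>l<d. W l p * cnj (W l q)))"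
    using ex MN by blast
  then obtain WN where WN: "\<And>i p q. i < r \<Longrightarrow> p < d \<Longrightarrow> q < d \<Longrightarrow> N i $$ (p,q) = (\<Sum>l<d. WN i l p * cnj (WN i l q))"
    by (metis choice)
  define T where "T = {..<r} \<times> {..<d} \<times> {..<d}"
  define u where "u (t::nat\<times>nat\<times>nat) = WM (fst t) (fst (snd t))" for t
  define w where "w (t::nat\<times>nat\<times>nat) = WN (fst t) (snd (snd t))" for t
  define zs where "zs (t::nat\<times>nat\<times>nat) p = u t (p div d) * w t (p mod d)" for t p
  have "\<Phi> = osum (d*d) T zs"
  proof (intro eq_matI)
    fix p q assume "p < dim_row (osum (d*d) T zs)" "q < dim_col (osum (d*d) T zs)"
    then have pq: "p < d*d" "q < d*d" by auto
    then have d0: "0 < d" by (metis mult_is_0 not_gr_zero not_less_zero)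
    have b: "p div d < d" "q div d < d" "p mod d < d" "q mod d < d"
      using pq d0 by (auto simp: less_mult_imp_div_less)
    have Mc: "M i \<in> carrier_mat d d" "N i \<in> carrier_mat d d" if "i < r" for i
      using MN that psd_carrier by auto
    have "\<Phi> $$ (p,q) = (\<Sum>i<r. kron (M i) (N i) $$ (p,q))" unfolding Phi using pq by simp
    also have "\<dots> = (\<Sum>i<r. M i $$ (p div d, q div d) * N i $$ (p mod d, q mod d))"
    proof (intro sum.cong refl)
      fix i assume "i \<in> {..<r}"
      then show "kron (M i) (N i) $$ (p,q) = M i $$ (p div d, q div d) * N i $$ (p mod d, q mod d)"
        using kron_index_c[OF Mc(1)[of i] Mc(2)[of i] pq] by simp
    qed
    also have "\<dots> = (\<Sum>i<r. \<Sum>x<d. \<Sum>y<d. (WM i x (p div d) * WN i y (p mod d)) * cnj (WM i x (q div d) * WN i y (q mod d)))"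
      using b by (intro sum.cong refl) (simp add: WM WN sum_product algebra_simps)
    also have "\<dots> = (\<Sum>(i,x,y)\<in>T. (WM i x (p div d) * WN i y (p mod d)) * cnj (WM i x (q div d) * WN i y (q mod d)))"
      unfolding T_def by (simp add: sum.cartesian_product)
    also have "\<dots> = osum (d*d) T zs $$ (p,q)"
      using pq by (auto simp: zs_def u_def w_def intro!: sum.cong)
    finally show "\<Phi> $$ (p,q) = osum (d*d) T zs $$ (p,q)" .
  qed (auto simp: Phi)
  moreover have "finite T" unfolding T_def by simp
  ultimately show ?thesis unfolding zs_def by blast
qed

lemma sym_entries:
  assumes T: "finite T" and Phi: "\<Phi> = osum (d*d) T zs" and sw: "swap_op d * \<Phi> = \<Phi>"
    and t: "t \<in> T" and p: "p < d*d"
  shows "zs t (sig d p) = zs t p"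
proof -
  have Phic: "\<Phi> \<in> carrier_mat (d*d) (d*d)" unfolding Phi by simp
  have sp: "sig d p < d*d" by (rule sig_bound[OF p])
  have row: "\<Phi> $$ (sig d p, q) = \<Phi> $$ (p, q)" if "q < d*d" for q
    using swap_mult_index[OF Phic p that] sw by simp
  let ?x = "\<lambda>t. zs t (sig d p)" and ?y = "\<lambda>t. zs t p"
  have "(\<Sum>t\<in>T. (?x t - ?y t) * cnj (?x t - ?y t)) =
      \<Phi> $$ (sig d p, sig d p) - \<Phi> $$ (sig d p, p) - \<Phi> $$ (p, sig d p) + \<Phi> $$ (p,p)"
    unfolding Phi using p sp by (simp add: sum_subtractf sum.distrib algebra_simps)
  also have "\<dots> = 0" using row[OF sp] row[OF p] by simp
  finally have e0: "(\<Sum>t\<in>T. (?x t - ?y t) * cnj (?x t - ?y t)) = 0" .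
  have "(\<Sum>t\<in>T. complex_of_real ((cmod (?x t - ?y t))^2)) = (\<Sum>t\<in>T. (?x t - ?y t) * cnj (?x t - ?y t))"
    by (simp only: mult_cnj_self)
  then have "(\<Sum>t\<in>T. complex_of_real ((cmod (?x t - ?y t))^2)) = 0" using e0 by simp
  then have "(\<Sum>t\<in>T. (cmod (?x t - ?y t))^2) = 0"
    by (metis of_real_eq_0_iff of_real_sum)
  then have "\<forall>t\<in>T. (cmod (?x t - ?y t))^2 = 0"
    using sum_nonneg_eq_0_iff[OF T, of "\<lambda>t. (cmod (?x t - ?y t))^2"] by simp
  then show ?thesis using t by simp
qed

lemma sym_tens:
  fixes u w :: "nat \<Rightarrow> complex"
  assumes h: "\<And>a b. a < d \<Longrightarrow> b < d \<Longrightarrow> u b * w a = u a * w b"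
  shows "\<exists>\<psi>. \<forall>p<d*d. \<forall>q<d*d. (u (p div d) * w (p mod d)) * cnj (u (q div d) * w (q mod d)) = tens d \<psi> p * cnj (tens d \<psi> q)"
proof (cases "\<forall>a<d. u a = 0")
  case True
  show ?thesis
  proof (intro exI[of _ "\<lambda>_. 0"] allI impI)
    fix p q assume pq: "p < d*d" "q < d*d"
    then have "p div d < d" by (simp add: less_mult_imp_div_less)
    then show "(u (p div d) * w (p mod d)) * cnj (u (q div d) * w (q mod d)) = tens d (\<lambda>_. 0) p * cnj (tens d (\<lambda>_. 0) q)"
      using True by (simp add: tens_def)
  qed
next
  case False
  then obtain a0 where a0: "a0 < d" "u a0 \<noteq> 0" by blast
  define c where "c = w a0 / u a0"
  have wc: "w b = c * u b" if "b < d" for b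
    using h[OF a0(1) that] a0(2) unfolding c_def by (simp add: field_simps)
  define s where "s = complex_of_real (sqrt (cmod c))"
  have s4: "s * s * (cnj s * cnj s) = c * cnj c"
    unfolding s_def mult_cnj_self by (simp flip: of_real_mult add: power2_eq_square)
  show ?thesis
  proof (intro exI[of _ "\<lambda>a. s * u a"] allI impI)
    fix p q assume pq: "p < d*d" "q < d*d"
    then have d0: "0 < d" by (metis mult_is_0 not_gr_zero not_less_zero)
    have b: "p mod d < d" "q mod d < d" using d0 by auto
    have "(u (p div d) * w (p mod d)) * cnj (u (q div d) * w (q mod d)) =
       (c * cnj c) * (u (p div d) * u (p mod d) * cnj (u (q div d) * u (q mod d)))"
      using b by (simp add: wc)
    also have "\<dots> = (s * s * (cnj s * cnj s)) * (u (p div d) * u (p mod d) * cnj (u (q div d) * u (q mod d)))"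
      by (simp add: s4)
    also have "\<dots> = tens d (\<lambda>a. s * u a) p * cnj (tens d (\<lambda>a. s * u a) q)"
      unfolding tens_def by simp
    finally show "(u (p div d) * w (p mod d)) * cnj (u (q div d) * w (q mod d)) =
      tens d (\<lambda>a. s * u a) p * cnj (tens d (\<lambda>a. s * u a) q)" .
  qed
qed



lemma key_real:
  assumes T: "finite T" and L: "lin_map_mat d m L" and al: "\<alpha> < m" and be: "\<beta> < m"
    and HR: "\<And>b b'. b < d \<Longrightarrow> b' < d \<Longrightarrow> (\<Sum>t\<in>T. complex_of_real (r t) * (ps t b * cnj (ps t b'))) = 0"
  shows "(\<Sum>t\<in>T. complex_of_real (r t) * (L (outer d (ps t)) $$ (\<alpha>,\<beta>) - nrm d (ps t) * y)) = 0"
proof -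
  have Z: "mat d d (\<lambda>x. \<Sum>t\<in>T. complex_of_real (r t) * outer d (ps t) $$ x) = 0\<^sub>m d d"
    using HR by (intro eq_matI) (auto simp: outer_def)
  have "L (mat d d (\<lambda>x. \<Sum>t\<in>T. complex_of_real (r t) * outer d (ps t) $$ x)) =
      mat m m (\<lambda>x. \<Sum>t\<in>T. complex_of_real (r t) * L (outer d (ps t)) $$ x)"
    by (rule lin_map_sum[OF L T outer_carrier])
  then have Z2: "mat m m (\<lambda>x. \<Sum>t\<in>T. complex_of_real (r t) * L (outer d (ps t)) $$ x) = 0\<^sub>m m m"
    unfolding Z lin_map_zero[OF L] by simp
  have 1: "(\<Sum>t\<in>T. complex_of_real (r t) * L (outer d (ps t)) $$ (\<alpha>,\<beta>)) = 0"
    using arg_cong[OF Z2, of "\<lambda>M. M $$ (\<alpha>,\<beta>)"] al be by simp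
  have "(\<Sum>t\<in>T. complex_of_real (r t) * nrm d (ps t)) = (\<Sum>b<d. \<Sum>t\<in>T. complex_of_real (r t) * (ps t b * cnj (ps t b)))"
    unfolding nrm_def sum_distrib_left by (rule sum.swap)
  also have "\<dots> = 0" using HR by simp
  finally have 2: "(\<Sum>t\<in>T. complex_of_real (r t) * nrm d (ps t)) = 0" .
  have "(\<Sum>t\<in>T. complex_of_real (r t) * (L (outer d (ps t)) $$ (\<alpha>,\<beta>) - nrm d (ps t) * y)) =
     (\<Sum>t\<in>T. complex_of_real (r t) * L (outer d (ps t)) $$ (\<alpha>,\<beta>)) - (\<Sum>t\<in>T. complex_of_real (r t) * nrm d (ps t)) * y"
    by (simp add: algebra_simps sum_subtractf sum_distrib_right sum_distrib_left)
  then show ?thesis using 1 2 by simp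
qed

lemma key:
  assumes T: "finite T" and L: "lin_map_mat d m L" and al: "\<alpha> < m" and be: "\<beta> < m"
    and H: "\<And>b b'. b < d \<Longrightarrow> b' < d \<Longrightarrow> (\<Sum>t\<in>T. a t * (ps t b * cnj (ps t b'))) = 0"
    and adef: "\<And>t. t \<in> T \<Longrightarrow> a t = L (outer d (ps t)) $$ (\<alpha>,\<beta>) - nrm d (ps t) * y"
  shows "\<forall>t\<in>T. a t = 0"
proof -
  have Hc: "(\<Sum>t\<in>T. cnj (a t) * (ps t b * cnj (ps t b'))) = 0" if "b < d" "b' < d" for b b'
  proof -
    have "(\<Sum>t\<in>T. cnj (a t) * (ps t b * cnj (ps t b'))) = cnj (\<Sum>t\<in>T. a t * (ps t b' * cnj (ps t b)))"
      unfolding cnj_sum by (intro sum.cong refl) simp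
    also have "\<dots> = 0" using H[OF that(2,1)] by simp
    finally show ?thesis .
  qed
  have re: "complex_of_real (Re z) = (z + cnj z) / 2" for z :: complex
    by (simp add: complex_add_cnj)
  have im: "complex_of_real (Im z) = (z - cnj z) / (2 * \<i>)" for z :: complex
    by (simp add: complex_eq_iff)
  have HRe: "(\<Sum>t\<in>T. complex_of_real (Re (a t)) * (ps t b * cnj (ps t b'))) = 0" if "b < d" "b' < d" for b b'
  proof -
    have "(\<Sum>t\<in>T. complex_of_real (Re (a t)) * (ps t b * cnj (ps t b'))) =
        ((\<Sum>t\<in>T. a t * (ps t b * cnj (ps t b'))) + (\<Sum>t\<in>T. cnj (a t) * (ps t b * cnj (ps t b')))) / 2"
    proof -
      have "(\<Sum>t\<in>T. complex_of_real (Re (a t)) * (ps t b * cnj (ps t b'))) =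
          (\<Sum>t\<in>T. (a t * (ps t b * cnj (ps t b')) + cnj (a t) * (ps t b * cnj (ps t b'))) / 2)"
        unfolding re by (intro sum.cong refl) (simp add: field_simps)
      also have "\<dots> = ((\<Sum>t\<in>T. a t * (ps t b * cnj (ps t b'))) + (\<Sum>t\<in>T. cnj (a t) * (ps t b * cnj (ps t b')))) / 2"
        by (simp only: sum_divide_distrib[symmetric] sum.distrib)
      finally show ?thesis .
    qed
    then show ?thesis using H[OF that] Hc[OF that] by simp
  qed
  have HIm: "(\<Sum>t\<in>T. complex_of_real (Im (a t)) * (ps t b * cnj (ps t b'))) = 0" if "b < d" "b' < d" for b b'
  proof -
    have "(\<Sum>t\<in>T. complex_of_real (Im (a t)) * (ps t b * cnj (ps t b'))) =
        ((\<Sum>t\<in>T. a t * (ps t b * cnj (ps t b'))) - (\<Sum>t\<in>T. cnj (a t) * (ps t b * cnj (ps t b')))) / (2 * \<i>)"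
    proof -
      have "(\<Sum>t\<in>T. complex_of_real (Im (a t)) * (ps t b * cnj (ps t b'))) =
          (\<Sum>t\<in>T. (a t * (ps t b * cnj (ps t b')) - cnj (a t) * (ps t b * cnj (ps t b'))) / (2 * \<i>))"
        unfolding im by (intro sum.cong refl) (simp add: field_simps)
      also have "\<dots> = ((\<Sum>t\<in>T. a t * (ps t b * cnj (ps t b'))) - (\<Sum>t\<in>T. cnj (a t) * (ps t b * cnj (ps t b')))) / (2 * \<i>)"
        by (simp only: sum_divide_distrib[symmetric] sum_subtractf)
      finally show ?thesis .
    qed
    then show ?thesis using H[OF that] Hc[OF that] by simp
  qed
  have s1: "(\<Sum>t\<in>T. complex_of_real (Re (a t)) * a t) = 0"
    using key_real[OF T L al be HRe, where y=y] adef by (simp cong: sum.cong)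
  have s2: "(\<Sum>t\<in>T. complex_of_real (Im (a t)) * a t) = 0"
    using key_real[OF T L al be HIm, where y=y] adef by (simp cong: sum.cong)
  have "(\<Sum>t\<in>T. (Re (a t))^2) = Re (\<Sum>t\<in>T. complex_of_real (Re (a t)) * a t)"
    by (simp add: Re_sum power2_eq_square)
  then have r0: "(\<Sum>t\<in>T. (Re (a t))^2) = 0" using s1 by simp
  have "(\<Sum>t\<in>T. (Im (a t))^2) = Im (\<Sum>t\<in>T. complex_of_real (Im (a t)) * a t)"
    by (simp add: Im_sum power2_eq_square)
  then have i0: "(\<Sum>t\<in>T. (Im (a t))^2) = 0" using s2 by simp
  have "\<forall>t\<in>T. (Re (a t))^2 = 0" using sum_nonneg_eq_0_iff[OF T, of "\<lambda>t. (Re (a t))^2"] r0 by simp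
  moreover have "\<forall>t\<in>T. (Im (a t))^2 = 0" using sum_nonneg_eq_0_iff[OF T, of "\<lambda>t. (Im (a t))^2"] i0 by simp
  ultimately show ?thesis by (simp add: complex_eq_iff)
qed



lemma mtrace_smult: "A \<in> carrier_mat n n \<Longrightarrow> mtrace (c \<cdot>\<^sub>m A) = c * mtrace A"
  unfolding mtrace_def by (simp add: sum_distrib_left)

lemma nrm_real: "nrm d f = complex_of_real (\<Sum>a<d. (cmod (f a))^2)"
  unfolding nrm_def mult_cnj_self by simp

lemma feasible_rho:
  fixes \<Lambda> :: "complex mat \<Rightarrow> complex mat"
  assumes L: "lin_map_mat n m \<Lambda>" and Y: "Y \<in> carrier_mat m m" and X: "X \<in> carrier_mat n n"
    and s: "nrm (n*k) \<psi> = complex_of_real s" "0 < s"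
    and LY: "\<And>\<alpha> \<beta>. \<alpha> < m \<Longrightarrow> \<beta> < m \<Longrightarrow> \<Lambda> (ptrace2 n k (outer (n*k) \<psi>)) $$ (\<alpha>,\<beta>) = nrm (n*k) \<psi> * Y $$ (\<alpha>,\<beta>)"
  shows "ereal (Re (mtrace (X * ptrace2 n k (outer (n*k) \<psi>))) / s) \<le> valP n m k X \<Lambda> Y"
proof -
  let ?R = "ptrace2 n k (outer (n*k) \<psi>)"
  define c where "c = 1 / complex_of_real s"
  define \<rho> where "\<rho> = c \<cdot>\<^sub>m ?R"
  have Rc: "?R \<in> carrier_mat n n" by simp
  have rc: "\<rho> \<in> carrier_mat n n" unfolding \<rho>_def by simp
  have LR: "\<Lambda> ?R \<in> carrier_mat m m" using lin_mapD(1)[OF L Rc] .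
  have lam: "\<Lambda> \<rho> = Y"
    unfolding \<rho>_def lin_mapD(3)[OF L Rc]
    using LR Y LY s by (intro eq_matI) (auto simp: c_def)
  have tr: "mtrace \<rho> = 1"
    unfolding \<rho>_def mtrace_smult[OF Rc] mtrace_ptrace2_outer c_def using s by simp
  define sq where "sq = complex_of_real (sqrt s)"
  have sq: "sq * cnj sq = complex_of_real s" unfolding sq_def using s by (simp flip: of_real_mult)
  have os: "\<rho> = osum n {..<k} (\<lambda>l i. \<psi> (i*k+l) / sq)"
  proof (intro eq_matI)
    fix i j assume ij: "i < dim_row (osum n {..<k} (\<lambda>l i. \<psi> (i*k+l) / sq))" "j < dim_col (osum n {..<k} (\<lambda>l i. \<psi> (i*k+l) / sq))"
    then have ij': "i < n" "j < n" by auto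
    have "\<rho> $$ (i,j) = c * (\<Sum>l<k. \<psi> (i*k+l) * cnj (\<psi> (j*k+l)))"
      unfolding \<rho>_def ptrace2_outer using ij' by simp
    also have "\<dots> = (\<Sum>l<k. (\<psi> (i*k+l) / sq) * cnj (\<psi> (j*k+l) / sq))"
      unfolding sum_distrib_left c_def using sq
      by (intro sum.cong refl) (simp add: field_simps)
    finally show "\<rho> $$ (i,j) = osum n {..<k} (\<lambda>l i. \<psi> (i*k+l) / sq) $$ (i,j)" using ij' by simp
  qed (auto simp: \<rho>_def ptrace2_def)
  have psd: "psd n \<rho>" unfolding os by (rule psd_osum) simp
  have rk: "mrank n \<rho> \<le> k" unfolding os by (rule rank_osum)
  have "ereal (Re (mtrace (X * \<rho>))) \<le> valP n m k X \<Lambda> Y"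
    unfolding valP_def using rc lam tr psd rk by (intro Sup_upper) blast
  moreover have "Re (mtrace (X * \<rho>)) = Re (mtrace (X * ?R)) / s"
  proof -
    have "X * \<rho> = c \<cdot>\<^sub>m (X * ?R)" unfolding \<rho>_def by (rule mult_smult_distrib[OF X Rc])
    then have "mtrace (X * \<rho>) = c * mtrace (X * ?R)" using mtrace_smult[of "X * ?R" n c] X Rc by simp
    then show ?thesis unfolding c_def by (simp add: Re_divide_of_real)
  qed
  ultimately show ?thesis by simp
qed


lemma dir2:
  fixes n m k :: nat and X Y \<Phi> :: "complex mat" and \<Lambda> :: "complex mat \<Rightarrow> complex mat"
  assumes X: "X \<in> carrier_mat n n" and L: "lin_map_mat n m \<Lambda>" and Y: "Y \<in> carrier_mat m m"
    and sep: "\<Phi> \<in> SEP (n*k) (n*k)" and tr: "mtrace \<Phi> = 1" and sw: "swap_op (n*k) * \<Phi> = \<Phi>"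
    and con: "map_tensor_id (n*k) (n*k) m (\<lambda>\<rho>. \<Lambda> (ptrace2 n k \<rho>)) \<Phi> = kron Y (ptrace1 (n*k) (n*k) \<Phi>)"
  shows "ereal (Re (mtrace (kron (kron X (1\<^sub>m k)) (1\<^sub>m (n*k)) * \<Phi>))) \<le> valP n m k X \<Lambda> Y"
proof -
  let ?d = "n*k"
  obtain T :: "(nat \<times> nat \<times> nat) set" and zs u w where T: "finite T" and Phi: "\<Phi> = osum (?d*?d) T zs"
    and zsd: "\<And>t p. zs t p = u t (p div ?d) * w t (p mod ?d)"
    using sep_decomp[OF sep] by blast
  have sym: "zs t (sig ?d p) = zs t p" if "t \<in> T" "p < ?d*?d" for t p
    by (rule sym_entries[OF T Phi sw that])
  have hyp: "u t b * w t a = u t a * w t b" if t: "t \<in> T" and ab: "a < ?d" "b < ?d" for t a b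
  proof -
    have p: "a*?d+b < ?d*?d" using idx_bound[OF ab] .
    have "sig ?d (a*?d+b) = b*?d+a" unfolding sig_def using ab by simp
    then show ?thesis using sym[OF t p] ab by (simp add: zsd)
  qed
  have "\<forall>t. \<exists>\<psi>. t \<in> T \<longrightarrow> (\<forall>p<?d*?d. \<forall>q<?d*?d. zs t p * cnj (zs t q) = tens ?d \<psi> p * cnj (tens ?d \<psi> q))"
  proof
    fix t
    show "\<exists>\<psi>. t \<in> T \<longrightarrow> (\<forall>p<?d*?d. \<forall>q<?d*?d. zs t p * cnj (zs t q) = tens ?d \<psi> p * cnj (tens ?d \<psi> q))"
    proof (cases "t \<in> T")
      case True
      show ?thesis using sym_tens[of ?d "u t" "w t"] hyp[OF True] unfolding zsd by blast
    qed simp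
  qed
  then obtain ps where ps: "\<And>t p q. t \<in> T \<Longrightarrow> p < ?d*?d \<Longrightarrow> q < ?d*?d \<Longrightarrow>
      zs t p * cnj (zs t q) = tens ?d (ps t) p * cnj (tens ?d (ps t) q)"
    by (metis choice)
  have PhiE: "\<Phi> = osum (?d*?d) T (\<lambda>t. tens ?d (ps t))"
    unfolding Phi by (intro eq_matI) (auto intro!: sum.cong simp: ps)
  have Lt: "lin_map_mat ?d m (\<lambda>\<rho>. \<Lambda> (ptrace2 n k \<rho>))" by (rule lin_map_ptrace2[OF L])
  have cons: "\<Lambda> (ptrace2 n k (outer ?d (ps tt))) $$ (\<alpha>,\<beta>) = nrm ?d (ps tt) * Y $$ (\<alpha>,\<beta>)"
    if t: "tt \<in> T" and ab: "\<alpha> < m" "\<beta> < m" for tt \<alpha> \<beta>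
  proof -
    have H: "(\<Sum>t\<in>T. (\<Lambda> (ptrace2 n k (outer ?d (ps t))) $$ (\<alpha>,\<beta>) - nrm ?d (ps t) * Y $$ (\<alpha>,\<beta>)) * (ps t b * cnj (ps t b'))) = 0"
      if bb: "b < ?d" "b' < ?d" for b b'
    proof -
      have ij: "\<alpha>*?d+b < m*?d" "\<beta>*?d+b' < m*?d" using idx_bound ab bb by auto
      have P1: "ptrace1 ?d ?d \<Phi> \<in> carrier_mat ?d ?d" unfolding ptrace1_def by simp
      have "map_tensor_id ?d ?d m (\<lambda>\<rho>. \<Lambda> (ptrace2 n k \<rho>)) \<Phi> $$ (\<alpha>*?d+b, \<beta>*?d+b') =
          (\<Sum>t\<in>T. (ps t b * cnj (ps t b')) * \<Lambda> (ptrace2 n k (outer ?d (ps t))) $$ (\<alpha>,\<beta>))"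
        unfolding PhiE map_tensor_osum[OF Lt T] using ij bb by simp
      moreover have "kron Y (ptrace1 ?d ?d \<Phi>) $$ (\<alpha>*?d+b, \<beta>*?d+b') =
          Y $$ (\<alpha>,\<beta>) * (\<Sum>t\<in>T. nrm ?d (ps t) * (ps t b * cnj (ps t b')))"
        using kron_index_c[OF Y P1 ij] bb unfolding PhiE ptrace1_osum by simp
      ultimately have "(\<Sum>t\<in>T. (ps t b * cnj (ps t b')) * \<Lambda> (ptrace2 n k (outer ?d (ps t))) $$ (\<alpha>,\<beta>)) =
          Y $$ (\<alpha>,\<beta>) * (\<Sum>t\<in>T. nrm ?d (ps t) * (ps t b * cnj (ps t b')))"
        using con by simp
      then show ?thesis
        by (simp add: algebra_simps sum_subtractf sum_distrib_left)
    qed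
    have "\<forall>t\<in>T. \<Lambda> (ptrace2 n k (outer ?d (ps t))) $$ (\<alpha>,\<beta>) - nrm ?d (ps t) * Y $$ (\<alpha>,\<beta>) = 0"
      using key[where a="\<lambda>t. \<Lambda> (ptrace2 n k (outer ?d (ps t))) $$ (\<alpha>,\<beta>) - nrm ?d (ps t) * Y $$ (\<alpha>,\<beta>)"
        and y="Y $$ (\<alpha>,\<beta>)" and L="\<lambda>\<rho>. \<Lambda> (ptrace2 n k \<rho>)" and ps=ps and T=T and d="?d" and m=m, OF T Lt ab] H
      by simp
    then show ?thesis using t by simp
  qed
  define s where "s t = (\<Sum>a<?d. (cmod (ps t a))^2)" for t
  have nrm_s: "nrm ?d (ps t) = complex_of_real (s t)" for t unfolding s_def by (rule nrm_real)
  have s0: "0 \<le> s t" for t unfolding s_def by (intro sum_nonneg) simp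
  have "mtrace \<Phi> = (\<Sum>t\<in>T. complex_of_real (s t * s t))"
    unfolding PhiE mtrace_osum nrm_tens nrm_s by simp
  then have ss: "(\<Sum>t\<in>T. s t * s t) = 1" using tr by (metis of_real_eq_1_iff of_real_sum)
  define v where "v t = Re (mtrace (X * ptrace2 n k (outer ?d (ps t))))" for t
  have obj: "Re (mtrace (kron (kron X (1\<^sub>m k)) (1\<^sub>m ?d) * \<Phi>)) = (\<Sum>t\<in>T. s t * v t)"
    unfolding PhiE obj_osum[OF X] nrm_s v_def by (simp add: Re_sum)
  have bnd: "ereal (v t / s t) \<le> valP n m k X \<Lambda> Y" if "t \<in> T" "0 < s t" for t
    unfolding v_def by (rule feasible_rho[OF L Y X nrm_s that(2) cons[OF that(1)]])
  show ?thesis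
  proof (cases "valP n m k X \<Lambda> Y = \<infinity>")
    case True then show ?thesis by simp
  next
    case False
    obtain t0 where t0: "t0 \<in> T" "0 < s t0"
    proof (rule ccontr)
      assume "\<not> thesis"
      then have "\<forall>t\<in>T. s t = 0" using that s0 by (metis less_eq_real_def)
      then show False using ss by simp
    qed
    have "ereal (v t0 / s t0) \<le> valP n m k X \<Lambda> Y" by (rule bnd[OF t0])
    then obtain V where V: "valP n m k X \<Lambda> Y = ereal V" using False
      by (cases "valP n m k X \<Lambda> Y") auto
    have "s t * v t \<le> (s t * s t) * V" if "t \<in> T" for t
    proof (cases "s t = 0")
      case True then show ?thesis by simp
    next
      case False
      then have sp: "0 < s t" using s0[of t] by simp
      have "v t / s t \<le> V" using bnd[OF that sp] V by simp
      then have "v t \<le> V * s t" using sp by (simp add: divide_le_eq)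
      then show ?thesis using sp by (simp add: mult_left_mono algebra_simps)
    qed
    then have "(\<Sum>t\<in>T. s t * v t) \<le> (\<Sum>t\<in>T. (s t * s t) * V)" by (rule sum_mono)
    also have "\<dots> = V" using ss by (simp add: sum_distrib_right[symmetric])
    finally show ?thesis using obj V by simp
  qed
qed

theorem theorem1:
  fixes n m k :: nat and X Y :: "complex mat" and \<Lambda> :: "complex mat \<Rightarrow> complex mat"
  assumes "0 < n" and "0 < m" and "0 < k"
    and "X \<in> carrier_mat n n" and "hermitian X"
    and "lin_map_mat n m \<Lambda>"
    and "Y \<in> carrier_mat m m"
  shows "valP n m k X \<Lambda> Y = valC n m k X \<Lambda> Y"
proof (rule antisym)
  show "valP n m k X \<Lambda> Y \<le> valC n m k X \<Lambda> Y"
    unfolding valP_def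
  proof (rule Sup_least)
    fix x assume "x \<in> {ereal (Re (mtrace (X * \<rho>))) | \<rho>.
      \<rho> \<in> carrier_mat n n \<and> \<Lambda> \<rho> = Y \<and> mtrace \<rho> = 1 \<and> psd n \<rho> \<and> mrank n \<rho> \<le> k}"
    then obtain \<rho> where x: "x = ereal (Re (mtrace (X * \<rho>)))" and rho: "\<rho> \<in> carrier_mat n n" "\<Lambda> \<rho> = Y"
      "mtrace \<rho> = 1" "psd n \<rho>" "mrank n \<rho> \<le> k" by blast
    obtain \<Phi> where Phi: "\<Phi> \<in> SEP (n*k) (n*k)" "mtrace \<Phi> = 1" "swap_op (n*k) * \<Phi> = \<Phi>"
      "map_tensor_id (n*k) (n*k) m (\<lambda>\<rho>. \<Lambda> (ptrace2 n k \<rho>)) \<Phi> = kron Y (ptrace1 (n*k) (n*k) \<Phi>)"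
      "mtrace (kron (kron X (1\<^sub>m k)) (1\<^sub>m (n*k)) * \<Phi>) = mtrace (X * \<rho>)"
      using dir1[OF assms(4,6,7) rho] by blast
    show "x \<le> valC n m k X \<Lambda> Y"
      unfolding valC_def Let_def x using Phi by (intro Sup_upper) (auto intro!: exI[of _ \<Phi>])
  qed
  show "valC n m k X \<Lambda> Y \<le> valP n m k X \<Lambda> Y"
    unfolding valC_def Let_def
  proof (rule Sup_least)
    fix x assume "x \<in> {ereal (Re (mtrace (kron (kron X (1\<^sub>m k)) (1\<^sub>m (n*k)) * \<Phi>))) | \<Phi>.
        \<Phi> \<in> SEP (n*k) (n*k) \<and> mtrace \<Phi> = 1 \<and> swap_op (n*k) * \<Phi> = \<Phi> \<and>
        map_tensor_id (n*k) (n*k) m (\<lambda>\<rho>. \<Lambda> (ptrace2 n k \<rho>)) \<Phi> = kron Y (ptrace1 (n*k) (n*k) \<Phi>)}"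
    then obtain \<Phi> where x: "x = ereal (Re (mtrace (kron (kron X (1\<^sub>m k)) (1\<^sub>m (n*k)) * \<Phi>)))"
      and Phi: "\<Phi> \<in> SEP (n*k) (n*k)" "mtrace \<Phi> = 1" "swap_op (n*k) * \<Phi> = \<Phi>"
        "map_tensor_id (n*k) (n*k) m (\<lambda>\<rho>. \<Lambda> (ptrace2 n k \<rho>)) \<Phi> = kron Y (ptrace1 (n*k) (n*k) \<Phi>)"
      by blast
    show "x \<le> valP n m k X \<Lambda> Y" unfolding x by (rule dir2[OF assms(4,6,7) Phi])
  qed
qed

end
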